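(* Let $\mathbb{F}$ be a field of characteristic zero, $n\ge1$, $a\in(\mathbb{F}^* )^n$ and $B\in\mathbb{F}^{n\times n}$ symmetric. Suppose that $G=G(a,B)$ is twin-free and $\sum_{i=1}^n a_i\neq0$. Then $h(F_1,G)\,h(F_2,G)=h(F_1\cdot F_2,G)$ for all $F_1,F_2\in\mathcal{G}_1$ if and only if $\Gamma(a,B)$ acts transitively on $[n]$.
   Context: Graphs are finite multigraphs, possibly with loops and multiple edges. $G(a,B)$ is the weighted graph on vertex set $[n]$ with vertex weights $a_i$ and edge weights $B_{i,j}$; it is twin-free if no two rows of $B$ are equal. For a graph $F$, $\hom(F,G)=\sum_{\phi:V(F)\to[n]}\prod_{v\in V(F)}a_{\phi(v)}\prod_{uv\in E(F)}B_{\phi(u),\phi(v)}$ (edges with multiplicity) and $h(F,G)=\hom(F,G)/\big(\sum_{i=1}^n a_i\big)^{c(F)}$, where $c(F)$ is the number of connected components of $F$. $\mathcal{G}_1$ is the set of graphs with one labelled vertex; for $F_1,F_2\in\mathcal{G}_1$, $F_1\cdot F_2$ is obtained from their disjoint union by identifying the two labelled vertices; labels are forgotten when evaluating $h$. $\Gamma(a,B)$ is the group of permutations $\gamma$ of $[n]$ with $a_{\gamma(i)}=a_i$ and $B_{\gamma(i),\gamma(j)}=B_{i,j}$ for all $i,j$. *)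

theory Defs
  imports "HOL-Combinatorics.Permutations" "HOL-Library.FuncSet"
begin

text \<open>A finite multigraph (loops and multiple edges allowed) is represented as a pair
  (k, E): vertex set {0..<k}, and E a list of edges (u,v) (multiplicity = number of
  occurrences in the list; a loop is (u,u)).\<close>

type_synonym mgraph = "nat \<times> (nat \<times> nat) list"

definition wf_graph :: "mgraph \<Rightarrow> bool" where
  "wf_graph F \<longleftrightarrow> (\<forall>(u,v)\<in>set (snd F). u < fst F \<and> v < fst F)"

definition conn_rel :: "mgraph \<Rightarrow> (nat \<times> nat) set" where
  "conn_rel F = {(u,v). u < fst F \<and> v < fst F \<and>
      (u,v) \<in> (set (snd F) \<union> (set (snd F))\<inverse>)\<^sup>*}"

definition num_components :: "mgraph \<Rightarrow> nat" where
  "num_components F = card ({0..<fst F} // conn_rel F)"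

definition hom_w :: "mgraph \<Rightarrow> nat \<Rightarrow> (nat \<Rightarrow> 'a::comm_ring_1) \<Rightarrow> (nat \<Rightarrow> nat \<Rightarrow> 'a) \<Rightarrow> 'a" where
  "hom_w F n a B = (\<Sum>\<phi>\<in>({0..<fst F} \<rightarrow>\<^sub>E {0..<n}).
      (\<Prod>v\<in>{0..<fst F}. a (\<phi> v)) * (\<Prod>e\<leftarrow>snd F. B (\<phi> (fst e)) (\<phi> (snd e))))"

definition h_w :: "mgraph \<Rightarrow> nat \<Rightarrow> (nat \<Rightarrow> 'a::field) \<Rightarrow> (nat \<Rightarrow> nat \<Rightarrow> 'a) \<Rightarrow> 'a" where
  "h_w F n a B = hom_w F n a B / (\<Sum>i<n. a i) ^ num_components F"

type_synonym lgraph = "mgraph \<times> nat"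

definition is_lgraph :: "lgraph \<Rightarrow> bool" where
  "is_lgraph FL \<longleftrightarrow> wf_graph (fst FL) \<and> snd FL < fst (fst FL)"

text \<open>Gluing product F1 \<cdot> F2 (labels forgotten): disjoint union, the vertices of F2 are
  renumbered after those of F1 and the label of F2 is identified with the label of F1.\<close>
definition glue_map :: "nat \<Rightarrow> nat \<Rightarrow> nat \<Rightarrow> nat \<Rightarrow> nat" where
  "glue_map k1 l1 l2 v = (if v = l2 then l1 else if v < l2 then k1 + v else k1 + v - 1)"

definition glue :: "lgraph \<Rightarrow> lgraph \<Rightarrow> mgraph" where
  "glue FL1 FL2 = (let (F1,l1) = FL1; (F2,l2) = FL2; k1 = fst F1; k2 = fst F2;
      g = glue_map k1 l1 l2 in
     (k1 + k2 - 1, snd F1 @ map (\<lambda>(u,v). (g u, g v)) (snd F2)))"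

definition twin_free :: "nat \<Rightarrow> (nat \<Rightarrow> nat \<Rightarrow> 'a) \<Rightarrow> bool" where
  "twin_free n B \<longleftrightarrow> (\<forall>i<n. \<forall>j<n. i \<noteq> j \<longrightarrow> (\<exists>k<n. B i k \<noteq> B j k))"

definition aut_group :: "nat \<Rightarrow> (nat \<Rightarrow> 'a) \<Rightarrow> (nat \<Rightarrow> nat \<Rightarrow> 'a) \<Rightarrow> (nat \<Rightarrow> nat) set" where
  "aut_group n a B = {\<gamma>. \<gamma> permutes {0..<n} \<and> (\<forall>i<n. a (\<gamma> i) = a i) \<and>
      (\<forall>i<n. \<forall>j<n. B (\<gamma> i) (\<gamma> j) = B i j)}"

end

theory Submission
  imports Defs
begin


definition mrg :: "nat set \<Rightarrow> (nat \<Rightarrow> nat) \<Rightarrow> (nat \<Rightarrow> nat) \<Rightarrow> nat \<Rightarrow> nat" where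
  "mrg X \<chi> \<psi> = (\<lambda>v. if v \<in> X then \<chi> v else \<psi> v)"

definition ew :: "(nat \<Rightarrow> nat \<Rightarrow> 'a::comm_ring_1) \<Rightarrow> (nat \<times> nat) list \<Rightarrow> (nat \<Rightarrow> nat) \<Rightarrow> 'a" where
  "ew B E \<phi> = (\<Prod>e\<leftarrow>E. B (\<phi> (fst e)) (\<phi> (snd e)))"

definition lh :: "nat \<Rightarrow> (nat \<Rightarrow> 'a::comm_ring_1) \<Rightarrow> (nat \<Rightarrow> nat \<Rightarrow> 'a) \<Rightarrow> nat set \<Rightarrow> (nat \<times> nat) list \<Rightarrow> (nat \<Rightarrow> nat) \<Rightarrow> 'a" where
  "lh n a B X E \<psi> = (\<Sum>\<chi>\<in>X \<rightarrow>\<^sub>E {..<n}. (\<Prod>v\<in>X. a (\<chi> v)) * ew B E (mrg X \<chi> \<psi>))"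

lemma ew_append: "ew B (E1 @ E2) \<phi> = ew B E1 \<phi> * ew B E2 \<phi>"
  by (simp add: ew_def)

lemma ew_cong: "(\<And>e. e \<in> set E \<Longrightarrow> \<phi> (fst e) = \<phi>' (fst e) \<and> \<phi> (snd e) = \<phi>' (snd e)) \<Longrightarrow> ew B E \<phi> = ew B E \<phi>'"
  unfolding ew_def by (induction E) auto

lemma mrg_undef: assumes "\<chi> \<in> X \<rightarrow>\<^sub>E T" shows "mrg X \<chi> (\<lambda>_. undefined) = \<chi>"
  unfolding mrg_def by (rule ext) (simp add: PiE_arb[OF assms])

lemma hom_lh: "hom_w F n a B = lh n a B {0..<fst F} (snd F) (\<lambda>_. undefined)"
  unfolding hom_w_def lh_def ew_def atLeast0LessThan[of n]
  by (rule sum.cong[OF refl]) (simp add: mrg_undef)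

lemma lh_cong:
  assumes "\<And>e v. e \<in> set E \<Longrightarrow> v = fst e \<or> v = snd e \<Longrightarrow> v \<notin> X \<Longrightarrow> \<psi> v = \<psi>' v"
  shows "lh n a B X E \<psi> = lh n a B X E \<psi>'"
  unfolding lh_def
proof (rule sum.cong[OF refl])
  fix \<chi> show "(\<Prod>v\<in>X. a (\<chi> v)) * ew B E (mrg X \<chi> \<psi>) = (\<Prod>v\<in>X. a (\<chi> v)) * ew B E (mrg X \<chi> \<psi>')"
  proof -
    have "ew B E (mrg X \<chi> \<psi>) = ew B E (mrg X \<chi> \<psi>')"
    proof (rule ew_cong)
      fix e assume e: "e \<in> set E"
      have "\<psi> (fst e) = \<psi>' (fst e)" if "fst e \<notin> X" using assms[OF e _ that] by simp
      moreover have "\<psi> (snd e) = \<psi>' (snd e)" if "snd e \<notin> X" using assms[OF e _ that] by simp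
      ultimately show "mrg X \<chi> \<psi> (fst e) = mrg X \<chi> \<psi>' (fst e) \<and> mrg X \<chi> \<psi> (snd e) = mrg X \<chi> \<psi>' (snd e)"
        unfolding mrg_def by simp
    qed
    then show ?thesis by simp
  qed
qed

lemma mrg_restrict: assumes c: "\<chi> \<in> (Y \<union> Z) \<rightarrow>\<^sub>E T" shows "mrg Y (restrict \<chi> Y) (restrict \<chi> Z) = \<chi>"
  by (simp add: mrg_def fun_eq_iff PiE_arb[OF c])

lemma sum_PiE_Un:
  assumes "finite Y" "finite Z" "Y \<inter> Z = {}"
  shows "(\<Sum>\<chi>\<in>(Y \<union> Z) \<rightarrow>\<^sub>E T. f \<chi>) = (\<Sum>\<chi>1\<in>Y \<rightarrow>\<^sub>E T. \<Sum>\<chi>2\<in>Z \<rightarrow>\<^sub>E T. f (mrg Y \<chi>1 \<chi>2))"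
proof -
  have "(\<Sum>\<chi>\<in>(Y \<union> Z) \<rightarrow>\<^sub>E T. f \<chi>) = (\<Sum>p\<in>(Y \<rightarrow>\<^sub>E T) \<times> (Z \<rightarrow>\<^sub>E T). f (mrg Y (fst p) (snd p)))"
  proof (rule sum.reindex_bij_witness[of _ "\<lambda>p. mrg Y (fst p) (snd p)" "\<lambda>\<chi>. (restrict \<chi> Y, restrict \<chi> Z)"])
    fix \<chi> assume c: "\<chi> \<in> (Y \<union> Z) \<rightarrow>\<^sub>E T"
    then show "mrg Y (fst (restrict \<chi> Y, restrict \<chi> Z)) (snd (restrict \<chi> Y, restrict \<chi> Z)) = \<chi>"
      by (simp add: mrg_restrict)
  next
    fix \<chi> assume "\<chi> \<in> (Y \<union> Z) \<rightarrow>\<^sub>E T"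
    then show "(restrict \<chi> Y, restrict \<chi> Z) \<in> (Y \<rightarrow>\<^sub>E T) \<times> (Z \<rightarrow>\<^sub>E T)" by auto
  next
    fix p assume p: "p \<in> (Y \<rightarrow>\<^sub>E T) \<times> (Z \<rightarrow>\<^sub>E T)"
    obtain \<chi>1 \<chi>2 where pe: "p = (\<chi>1, \<chi>2)" by fastforce
    have 1: "\<chi>1 \<in> Y \<rightarrow>\<^sub>E T" "\<chi>2 \<in> Z \<rightarrow>\<^sub>E T" using p pe by auto
    show "(restrict (mrg Y (fst p) (snd p)) Y, restrict (mrg Y (fst p) (snd p)) Z) = p"
      using 1 assms(3) unfolding pe by (auto simp: mrg_def fun_eq_iff PiE_arb[OF 1(1)] PiE_arb[OF 1(2)])
    show "mrg Y (fst p) (snd p) \<in> (Y \<union> Z) \<rightarrow>\<^sub>E T"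
      using 1 unfolding pe by (auto simp: mrg_def PiE_iff extensional_def)
  qed (simp add: mrg_restrict)
  also have "\<dots> = (\<Sum>\<chi>1\<in>Y \<rightarrow>\<^sub>E T. \<Sum>\<chi>2\<in>Z \<rightarrow>\<^sub>E T. f (mrg Y \<chi>1 \<chi>2))"
    by (simp add: sum.cartesian_product case_prod_beta)
  finally show ?thesis .
qed

lemma lh_split:
  assumes "finite Y" "finite Z" "Y \<inter> Z = {}"
  shows "lh n a B (Y \<union> Z) E \<psi> = (\<Sum>\<chi>1\<in>Y \<rightarrow>\<^sub>E {..<n}. (\<Prod>v\<in>Y. a (\<chi>1 v)) * lh n a B Z E (mrg Y \<chi>1 \<psi>))"
proof -
  have "lh n a B (Y \<union> Z) E \<psi> = (\<Sum>\<chi>1\<in>Y \<rightarrow>\<^sub>E {..<n}. \<Sum>\<chi>2\<in>Z \<rightarrow>\<^sub>E {..<n}.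
     (\<Prod>v\<in>Y \<union> Z. a (mrg Y \<chi>1 \<chi>2 v)) * ew B E (mrg (Y \<union> Z) (mrg Y \<chi>1 \<chi>2) \<psi>))"
    unfolding lh_def using assms by (rule sum_PiE_Un)
  also have "\<dots> = (\<Sum>\<chi>1\<in>Y \<rightarrow>\<^sub>E {..<n}. \<Sum>\<chi>2\<in>Z \<rightarrow>\<^sub>E {..<n}.
     (\<Prod>v\<in>Y. a (\<chi>1 v)) * ((\<Prod>v\<in>Z. a (\<chi>2 v)) * ew B E (mrg Z \<chi>2 (mrg Y \<chi>1 \<psi>))))"
  proof (intro sum.cong refl)
    fix \<chi>1 \<chi>2 assume "\<chi>2 \<in> Z \<rightarrow>\<^sub>E {..<n}"
    have 1: "(\<Prod>v\<in>Y \<union> Z. a (mrg Y \<chi>1 \<chi>2 v)) = (\<Prod>v\<in>Y. a (mrg Y \<chi>1 \<chi>2 v)) * (\<Prod>v\<in>Z. a (mrg Y \<chi>1 \<chi>2 v))"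
      using assms by (rule prod.union_disjoint)
    have 2: "(\<Prod>v\<in>Y. a (mrg Y \<chi>1 \<chi>2 v)) = (\<Prod>v\<in>Y. a (\<chi>1 v))"
      by (intro prod.cong refl) (simp add: mrg_def)
    have 3: "(\<Prod>v\<in>Z. a (mrg Y \<chi>1 \<chi>2 v)) = (\<Prod>v\<in>Z. a (\<chi>2 v))"
      using assms(3) by (intro prod.cong refl) (auto simp: mrg_def)
    have 4: "mrg (Y \<union> Z) (mrg Y \<chi>1 \<chi>2) \<psi> = mrg Z \<chi>2 (mrg Y \<chi>1 \<psi>)"
      using assms(3) by (auto simp: mrg_def fun_eq_iff)
    show "(\<Prod>v\<in>Y \<union> Z. a (mrg Y \<chi>1 \<chi>2 v)) * ew B E (mrg (Y \<union> Z) (mrg Y \<chi>1 \<chi>2) \<psi>) =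
      (\<Prod>v\<in>Y. a (\<chi>1 v)) * ((\<Prod>v\<in>Z. a (\<chi>2 v)) * ew B E (mrg Z \<chi>2 (mrg Y \<chi>1 \<psi>)))"
      unfolding 1 2 3 4 by (simp add: mult.assoc)
  qed
  also have "\<dots> = (\<Sum>\<chi>1\<in>Y \<rightarrow>\<^sub>E {..<n}. (\<Prod>v\<in>Y. a (\<chi>1 v)) * lh n a B Z E (mrg Y \<chi>1 \<psi>))"
    unfolding lh_def by (simp only: sum_distrib_left)
  finally show ?thesis .
qed

lemma lh_const_edges:
  assumes "\<And>e. e \<in> set E1 \<Longrightarrow> fst e \<notin> X \<and> snd e \<notin> X"
  shows "lh n a B X (E1 @ E2) \<psi> = ew B E1 \<psi> * lh n a B X E2 \<psi>"
proof -
  have "ew B E1 (mrg X \<chi> \<psi>) = ew B E1 \<psi>" for \<chi>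
    by (rule ew_cong) (auto simp: mrg_def dest: assms)
  then show ?thesis unfolding lh_def ew_append sum_distrib_left
    by (intro sum.cong refl) (simp only: mult.left_commute)
qed

lemma lh_prod:
  assumes "finite X1" "finite X2" "X1 \<inter> X2 = {}"
    and "\<And>e. e \<in> set E1 \<Longrightarrow> fst e \<notin> X2 \<and> snd e \<notin> X2"
    and "\<And>e. e \<in> set E2 \<Longrightarrow> fst e \<notin> X1 \<and> snd e \<notin> X1"
  shows "lh n a B (X1 \<union> X2) (E1 @ E2) \<psi> = lh n a B X1 E1 \<psi> * lh n a B X2 E2 \<psi>"
proof -
  have "lh n a B (X1 \<union> X2) (E1 @ E2) \<psi> = (\<Sum>\<chi>1\<in>X1 \<rightarrow>\<^sub>E {..<n}. (\<Prod>v\<in>X1. a (\<chi>1 v)) * lh n a B X2 (E1 @ E2) (mrg X1 \<chi>1 \<psi>))"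
    using assms(1-3) by (rule lh_split)
  also have "\<dots> = (\<Sum>\<chi>1\<in>X1 \<rightarrow>\<^sub>E {..<n}. (\<Prod>v\<in>X1. a (\<chi>1 v)) * (ew B E1 (mrg X1 \<chi>1 \<psi>) * lh n a B X2 E2 \<psi>))"
  proof (rule sum.cong[OF refl], rule arg_cong[where f="\<lambda>x. _ * x"])
    fix \<chi>1
    have "lh n a B X2 (E1 @ E2) (mrg X1 \<chi>1 \<psi>) = ew B E1 (mrg X1 \<chi>1 \<psi>) * lh n a B X2 E2 (mrg X1 \<chi>1 \<psi>)"
      using assms(4) by (rule lh_const_edges)
    also have "lh n a B X2 E2 (mrg X1 \<chi>1 \<psi>) = lh n a B X2 E2 \<psi>"
      by (rule lh_cong) (auto simp: mrg_def dest: assms(5))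
    finally show "lh n a B X2 (E1 @ E2) (mrg X1 \<chi>1 \<psi>) = ew B E1 (mrg X1 \<chi>1 \<psi>) * lh n a B X2 E2 \<psi>" .
  qed
  also have "\<dots> = lh n a B X1 E1 \<psi> * lh n a B X2 E2 \<psi>"
    unfolding lh_def sum_distrib_right by (intro sum.cong refl) (simp only: mult.assoc)
  finally show ?thesis .
qed

lemma lh_rename:
  assumes bij: "bij_betw \<sigma> X' X" and fin: "finite X'"
    and cond: "\<And>e v. e \<in> set E \<Longrightarrow> v = fst e \<or> v = snd e \<Longrightarrow> \<sigma> v \<in> X \<Longrightarrow> v \<in> X'"
  shows "lh n a B X (map (\<lambda>(u,v). (\<sigma> u, \<sigma> v)) E) \<psi> = lh n a B X' E (\<psi> \<circ> \<sigma>)"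
  unfolding lh_def
proof (rule sum.reindex_bij_witness[of _ "\<lambda>\<chi>'. restrict (\<chi>' \<circ> inv_into X' \<sigma>) X" "\<lambda>\<chi>. restrict (\<chi> \<circ> \<sigma>) X'"])
  have inj: "inj_on \<sigma> X'" and im: "\<sigma> ` X' = X" using bij by (auto simp: bij_betw_def)
  fix \<chi> assume \<chi>: "\<chi> \<in> X \<rightarrow>\<^sub>E {..<n}"
  show "restrict (restrict (\<chi> \<circ> \<sigma>) X' \<circ> inv_into X' \<sigma>) X = \<chi>"
  proof (rule ext)
    fix x show "restrict (restrict (\<chi> \<circ> \<sigma>) X' \<circ> inv_into X' \<sigma>) X x = \<chi> x"
    proof (cases "x \<in> X")
      case True
      then have "inv_into X' \<sigma> x \<in> X'" "\<sigma> (inv_into X' \<sigma> x) = x"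
        using im by (auto intro: inv_into_into f_inv_into_f)
      then show ?thesis using True by simp
    qed (simp add: PiE_arb[OF \<chi>])
  qed
  show "restrict (\<chi> \<circ> \<sigma>) X' \<in> X' \<rightarrow>\<^sub>E {..<n}" using \<chi> im by (auto simp: PiE_iff)
  have "(\<Prod>v\<in>X'. a (restrict (\<chi> \<circ> \<sigma>) X' v)) = (\<Prod>v\<in>X'. a (\<chi> (\<sigma> v)))" by simp
  also have "\<dots> = (\<Prod>v\<in>X. a (\<chi> v))"
    using prod.reindex[OF inj, of "\<lambda>v. a (\<chi> v)"] im by simp
  finally have P: "(\<Prod>v\<in>X'. a (restrict (\<chi> \<circ> \<sigma>) X' v)) = (\<Prod>v\<in>X. a (\<chi> v))" .
  have W: "ew B E (mrg X' (restrict (\<chi> \<circ> \<sigma>) X') (\<psi> \<circ> \<sigma>)) = ew B (map (\<lambda>(u, v). (\<sigma> u, \<sigma> v)) E) (mrg X \<chi> \<psi>)"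
  proof -
    have key: "mrg X' (restrict (\<chi> \<circ> \<sigma>) X') (\<psi> \<circ> \<sigma>) w = mrg X \<chi> \<psi> (\<sigma> w)"
      if "e \<in> set E" "w = fst e \<or> w = snd e" for e w
      using cond[OF that] im by (auto simp: mrg_def)
    have "ew B E (mrg X' (restrict (\<chi> \<circ> \<sigma>) X') (\<psi> \<circ> \<sigma>)) = ew B E (mrg X \<chi> \<psi> \<circ> \<sigma>)"
      by (rule ew_cong) (simp add: key)
    also have "\<dots> = ew B (map (\<lambda>(u, v). (\<sigma> u, \<sigma> v)) E) (mrg X \<chi> \<psi>)"
      unfolding ew_def by (simp add: case_prod_beta o_def)
    finally show ?thesis .
  qed
  show "(\<Prod>v\<in>X'. a (restrict (\<chi> \<circ> \<sigma>) X' v)) * ew B E (mrg X' (restrict (\<chi> \<circ> \<sigma>) X') (\<psi> \<circ> \<sigma>)) =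
        (\<Prod>v\<in>X. a (\<chi> v)) * ew B (map (\<lambda>(u, v). (\<sigma> u, \<sigma> v)) E) (mrg X \<chi> \<psi>)"
    using P W by simp
next
  have inj: "inj_on \<sigma> X'" and im: "\<sigma> ` X' = X" using bij by (auto simp: bij_betw_def)
  fix \<chi>' assume \<chi>': "\<chi>' \<in> X' \<rightarrow>\<^sub>E {..<n}"
  show "restrict (restrict (\<chi>' \<circ> inv_into X' \<sigma>) X \<circ> \<sigma>) X' = \<chi>'"
  proof (rule ext)
    fix x show "restrict (restrict (\<chi>' \<circ> inv_into X' \<sigma>) X \<circ> \<sigma>) X' x = \<chi>' x"
    proof (cases "x \<in> X'")
      case True
      then have "\<sigma> x \<in> X" "inv_into X' \<sigma> (\<sigma> x) = x" using im inj by (auto intro: inv_into_f_f)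
      then show ?thesis using True by simp
    qed (simp add: PiE_arb[OF \<chi>'])
  qed
  show "restrict (\<chi>' \<circ> inv_into X' \<sigma>) X \<in> X \<rightarrow>\<^sub>E {..<n}"
    using \<chi>' im by (auto simp: PiE_iff inv_into_into)
qed



definition xr :: "nat \<Rightarrow> (nat \<Rightarrow> 'a::comm_ring_1) \<Rightarrow> (nat \<Rightarrow> nat \<Rightarrow> 'a) \<Rightarrow> mgraph \<Rightarrow> nat \<Rightarrow> nat \<Rightarrow> 'a" where
  "xr n a B F l i = lh n a B ({0..<fst F} - {l}) (snd F) (\<lambda>_. i)"

lemma sum_PiE_single: "(\<Sum>\<chi>\<in>{l} \<rightarrow>\<^sub>E T. f (\<chi> l)) = (\<Sum>w\<in>T. f w)"
proof (rule sum.reindex_bij_witness[of _ "\<lambda>w. restrict (\<lambda>_. w) {l}" "\<lambda>\<chi>. \<chi> l"])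
  fix \<chi> assume c: "\<chi> \<in> {l} \<rightarrow>\<^sub>E T"
  show "restrict (\<lambda>_. \<chi> l) {l} = \<chi>"
    by (rule ext) (simp add: PiE_arb[OF c])
qed auto

lemma wf_edge: "wf_graph F \<Longrightarrow> e \<in> set (snd F) \<Longrightarrow> fst e < fst F \<and> snd e < fst F"
  unfolding wf_graph_def by auto

lemma hom_xr:
  assumes "is_lgraph (F, l)"
  shows "hom_w F n a B = (\<Sum>i<n. a i * xr n a B F l i)"
proof -
  have wf: "wf_graph F" and l: "l < fst F" using assms by (auto simp: is_lgraph_def)
  have U: "{0..<fst F} = {l} \<union> ({0..<fst F} - {l})" using l by auto
  have "hom_w F n a B = lh n a B ({l} \<union> ({0..<fst F} - {l})) (snd F) (\<lambda>_. undefined)"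
    using hom_lh U by metis
  also have "\<dots> = (\<Sum>\<chi>1\<in>{l} \<rightarrow>\<^sub>E {..<n}. (\<Prod>v\<in>{l}. a (\<chi>1 v)) * lh n a B ({0..<fst F} - {l}) (snd F) (mrg {l} \<chi>1 (\<lambda>_. undefined)))"
    by (rule lh_split) auto
  also have "\<dots> = (\<Sum>\<chi>1\<in>{l} \<rightarrow>\<^sub>E {..<n}. a (\<chi>1 l) * xr n a B F l (\<chi>1 l))"
  proof (rule sum.cong[OF refl])
    fix \<chi>1
    have "lh n a B ({0..<fst F} - {l}) (snd F) (mrg {l} \<chi>1 (\<lambda>_. undefined)) = lh n a B ({0..<fst F} - {l}) (snd F) (\<lambda>_. \<chi>1 l)"
    proof (rule lh_cong)
      fix e v assume "e \<in> set (snd F)" "v = fst e \<or> v = snd e" "v \<notin> {0..<fst F} - {l}"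
      then have "v = l" using wf_edge[OF wf] by fastforce
      then show "mrg {l} \<chi>1 (\<lambda>_. undefined) v = \<chi>1 l" by (simp add: mrg_def)
    qed
    then show "(\<Prod>v\<in>{l}. a (\<chi>1 v)) * lh n a B ({0..<fst F} - {l}) (snd F) (mrg {l} \<chi>1 (\<lambda>_. undefined)) =
      a (\<chi>1 l) * xr n a B F l (\<chi>1 l)" by (simp add: xr_def)
  qed
  also have "\<dots> = (\<Sum>i<n. a i * xr n a B F l i)"
    by (rule sum_PiE_single)
  finally show ?thesis .
qed

definition pi2 :: "nat \<Rightarrow> nat \<Rightarrow> nat \<Rightarrow> nat" where
  "pi2 k1 l2 x = (if x < k1 then l2 else if x - k1 < l2 then x - k1 else x - k1 + 1)"

lemma glue_eq: "glue (F1, l1) (F2, l2) = (fst F1 + fst F2 - 1,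
   snd F1 @ map (\<lambda>(u,v). (glue_map (fst F1) l1 l2 u, glue_map (fst F1) l1 l2 v)) (snd F2))"
  by (simp add: glue_def Let_def)

lemma pi2_glue: "l1 < k1 \<Longrightarrow> pi2 k1 l2 (glue_map k1 l1 l2 u) = u"
  by (auto simp: pi2_def glue_map_def)

lemma glue_map_range: "l1 < k1 \<Longrightarrow> u < k2 \<Longrightarrow> l2 < k2 \<Longrightarrow> glue_map k1 l1 l2 u < k1 + k2 - 1"
  by (auto simp: glue_map_def)

lemma glue_map_lt: "l1 < k1 \<Longrightarrow> glue_map k1 l1 l2 u < k1 \<longleftrightarrow> u = l2"
  by (auto simp: glue_map_def)

lemma glue_bij:
  assumes "l1 < k1" "l2 < k2"
  shows "bij_betw (glue_map k1 l1 l2) ({0..<k2} - {l2}) {k1..<k1 + k2 - 1}"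
proof (rule bij_betw_byWitness[where f'="pi2 k1 l2"])
  show "\<forall>a\<in>{0..<k2} - {l2}. pi2 k1 l2 (glue_map k1 l1 l2 a) = a" using assms pi2_glue by blast
  show "\<forall>a'\<in>{k1..<k1 + k2 - 1}. glue_map k1 l1 l2 (pi2 k1 l2 a') = a'"
    by (auto simp: pi2_def glue_map_def)
  show "glue_map k1 l1 l2 ` ({0..<k2} - {l2}) \<subseteq> {k1..<k1 + k2 - 1}"
    using assms by (auto simp: glue_map_def)
  show "pi2 k1 l2 ` {k1..<k1 + k2 - 1} \<subseteq> {0..<k2} - {l2}"
    using assms by (auto simp: pi2_def)
qed

lemma glue_lgraph:
  assumes "is_lgraph (F1, l1)" "is_lgraph (F2, l2)"
  shows "is_lgraph (glue (F1, l1) (F2, l2), l1)"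
  using assms unfolding is_lgraph_def glue_eq wf_graph_def
  by (force simp: glue_map_def)

lemma xr_glue:
  assumes "is_lgraph (F1, l1)" "is_lgraph (F2, l2)"
  shows "xr n a B (glue (F1, l1) (F2, l2)) l1 i = xr n a B F1 l1 i * xr n a B F2 l2 i"
proof -
  define k1 where "k1 = fst F1"
  define k2 where "k2 = fst F2"
  define g where "g = glue_map k1 l1 l2"
  have wf1: "wf_graph F1" and l1: "l1 < k1" and wf2: "wf_graph F2" and l2: "l2 < k2"
    using assms by (auto simp: is_lgraph_def k1_def k2_def)
  have S: "{0..<k1 + k2 - 1} - {l1} = ({0..<k1} - {l1}) \<union> {k1..<k1 + k2 - 1}" using l1 l2 by auto
  have "xr n a B (glue (F1, l1) (F2, l2)) l1 i =
     lh n a B (({0..<k1} - {l1}) \<union> {k1..<k1 + k2 - 1}) (snd F1 @ map (\<lambda>(u,v). (g u, g v)) (snd F2)) (\<lambda>_. i)"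
    unfolding xr_def glue_eq g_def k1_def k2_def using S k1_def k2_def by simp
  also have "\<dots> = lh n a B ({0..<k1} - {l1}) (snd F1) (\<lambda>_. i) * lh n a B {k1..<k1 + k2 - 1} (map (\<lambda>(u,v). (g u, g v)) (snd F2)) (\<lambda>_. i)"
  proof (rule lh_prod)
    fix e assume "e \<in> set (snd F1)"
    then have "fst e < k1" "snd e < k1" using wf_edge[OF wf1, of e] k1_def by auto
    then show "fst e \<notin> {k1..<k1 + k2 - 1} \<and> snd e \<notin> {k1..<k1 + k2 - 1}" by auto
  next
    fix e assume "e \<in> set (map (\<lambda>(u,v). (g u, g v)) (snd F2))"
    then obtain u v where "(u,v) \<in> set (snd F2)" "e = (g u, g v)" by auto
    moreover have "g w \<notin> {0..<k1} - {l1}" for w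
      using l1 by (auto simp: g_def glue_map_def)
    ultimately show "fst e \<notin> {0..<k1} - {l1} \<and> snd e \<notin> {0..<k1} - {l1}" by auto
  qed auto
  also have "lh n a B {k1..<k1 + k2 - 1} (map (\<lambda>(u,v). (g u, g v)) (snd F2)) (\<lambda>_. i) =
     lh n a B ({0..<k2} - {l2}) (snd F2) ((\<lambda>_. i) \<circ> g)"
  proof (rule lh_rename)
    show "bij_betw g ({0..<k2} - {l2}) {k1..<k1 + k2 - 1}" unfolding g_def using l1 l2 by (rule glue_bij)
    fix e v assume "e \<in> set (snd F2)" "v = fst e \<or> v = snd e" "g v \<in> {k1..<k1 + k2 - 1}"
    then show "v \<in> {0..<k2} - {l2}" using wf_edge[OF wf2, of e] l1 k2_def
      by (auto simp: g_def glue_map_def)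
  qed simp
  finally show ?thesis by (simp add: xr_def k1_def k2_def o_def)
qed

lemma aut_lt: "\<gamma> \<in> aut_group n a B \<Longrightarrow> x < n \<Longrightarrow> \<gamma> x < n"
  unfolding aut_group_def using permutes_in_image[of \<gamma> "{0..<n}" x] by auto

lemma ew_aut:
  assumes "\<gamma> \<in> aut_group n a B" "\<And>e. e \<in> set E \<Longrightarrow> \<phi> (fst e) < n \<and> \<phi> (snd e) < n"
  shows "ew B E (\<gamma> \<circ> \<phi>) = ew B E \<phi>"
  using assms(2) unfolding ew_def
proof (induction E)
  case (Cons e E)
  then show ?case using assms(1) by (simp add: aut_group_def)
qed simp

lemma lh_aut:
  assumes g: "\<gamma> \<in> aut_group n a B"
    and ps: "\<And>e v. e \<in> set E \<Longrightarrow> v = fst e \<or> v = snd e \<Longrightarrow> v \<notin> X \<Longrightarrow> \<psi> v < n"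
  shows "lh n a B X E (\<gamma> \<circ> \<psi>) = lh n a B X E \<psi>"
proof -
  have perm: "\<gamma> permutes {0..<n}" and ga: "\<And>i. i < n \<Longrightarrow> a (\<gamma> i) = a i" using g by (auto simp: aut_group_def)
  have "lh n a B X E \<psi> = lh n a B X E (\<gamma> \<circ> \<psi>)"
    unfolding lh_def
  proof (rule sum.reindex_bij_witness[of _ "\<lambda>\<chi>. restrict (inv \<gamma> \<circ> \<chi>) X" "\<lambda>\<chi>. restrict (\<gamma> \<circ> \<chi>) X"])
    fix \<chi> assume c: "\<chi> \<in> X \<rightarrow>\<^sub>E {..<n}"
    show "restrict (inv \<gamma> \<circ> restrict (\<gamma> \<circ> \<chi>) X) X = \<chi>"
      by (rule ext) (simp add: PiE_arb[OF c] permutes_inverses[OF perm])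
    show "restrict (\<gamma> \<circ> \<chi>) X \<in> X \<rightarrow>\<^sub>E {..<n}" using c aut_lt[OF g] by (auto simp: PiE_iff)
    have "(\<Prod>v\<in>X. a (restrict (\<gamma> \<circ> \<chi>) X v)) = (\<Prod>v\<in>X. a (\<chi> v))"
      using c ga by (intro prod.cong refl) (auto simp: PiE_iff)
    moreover have "ew B E (mrg X (restrict (\<gamma> \<circ> \<chi>) X) (\<gamma> \<circ> \<psi>)) = ew B E (\<gamma> \<circ> mrg X \<chi> \<psi>)"
      by (rule ew_cong) (simp add: mrg_def)
    moreover have "ew B E (\<gamma> \<circ> mrg X \<chi> \<psi>) = ew B E (mrg X \<chi> \<psi>)"
    proof (rule ew_aut[OF g])
      fix e assume "e \<in> set E"
      then show "mrg X \<chi> \<psi> (fst e) < n \<and> mrg X \<chi> \<psi> (snd e) < n"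
        using c ps[of e] by (auto simp: mrg_def PiE_iff)
    qed
    ultimately show "(\<Prod>v\<in>X. a (restrict (\<gamma> \<circ> \<chi>) X v)) * ew B E (mrg X (restrict (\<gamma> \<circ> \<chi>) X) (\<gamma> \<circ> \<psi>)) =
          (\<Prod>v\<in>X. a (\<chi> v)) * ew B E (mrg X \<chi> \<psi>)" by simp
  next
    fix \<chi> assume c: "\<chi> \<in> X \<rightarrow>\<^sub>E {..<n}"
    show "restrict (\<gamma> \<circ> restrict (inv \<gamma> \<circ> \<chi>) X) X = \<chi>"
      by (rule ext) (simp add: PiE_arb[OF c] permutes_inverses[OF perm])
    have "inv \<gamma> permutes {0..<n}" using perm by (rule permutes_inv)
    then show "restrict (inv \<gamma> \<circ> \<chi>) X \<in> X \<rightarrow>\<^sub>E {..<n}" using c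
      using permutes_in_image[of "inv \<gamma>" "{0..<n}"] by (auto simp: PiE_iff)
  qed
  then show ?thesis by simp
qed

lemma xr_aut:
  assumes "\<gamma> \<in> aut_group n a B" "i < n"
  shows "xr n a B F l (\<gamma> i) = xr n a B F l i"
  unfolding xr_def using lh_aut[OF assms(1), of "snd F" "{0..<fst F} - {l}" "\<lambda>_. i"] assms(2)
  by (simp add: o_def)



lemma rtrancl_map:
  assumes "\<And>x y. (x,y) \<in> R \<Longrightarrow> (f x, f y) \<in> R'\<^sup>*" "(x,y) \<in> R\<^sup>*"
  shows "(f x, f y) \<in> R'\<^sup>*"
  using assms(2)
proof (induction rule: rtrancl_induct)
  case (step y z)
  then show ?case using assms(1)[of y z] by (meson rtrancl_trans)
qed simp

lemma sym_rt: "(x,y) \<in> (R \<union> R\<inverse>)\<^sup>* \<Longrightarrow> (y,x) \<in> (R \<union> R\<inverse>)\<^sup>*"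
  by (metis sym_Un_converse sym_rtrancl symD)

lemma quot_img: "{0..<k} // conn_rel F = (\<lambda>x. conn_rel F `` {x}) ` {0..<k}"
  by (auto simp: quotient_def)

lemma cls_eq:
  assumes "x < fst F" "y < fst F"
  shows "conn_rel F `` {x} = conn_rel F `` {y} \<longleftrightarrow> (x,y) \<in> (set (snd F) \<union> (set (snd F))\<inverse>)\<^sup>*"
    (is "?L \<longleftrightarrow> (x,y) \<in> ?R")
proof
  assume "?L"
  moreover have "y \<in> conn_rel F `` {y}" using assms by (auto simp: conn_rel_def)
  ultimately show "(x,y) \<in> ?R" by (auto simp: conn_rel_def)
next
  assume xy: "(x,y) \<in> ?R"
  then have yx: "(y,x) \<in> ?R" by (rule sym_rt)
  show ?L
  proof (intro set_eqI iffI)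
    fix z assume "z \<in> conn_rel F `` {x}"
    then show "z \<in> conn_rel F `` {y}" using yx assms by (auto simp: conn_rel_def intro: rtrancl_trans)
  next
    fix z assume "z \<in> conn_rel F `` {y}"
    then show "z \<in> conn_rel F `` {x}" using xy assms by (auto simp: conn_rel_def intro: rtrancl_trans)
  qed
qed

lemma card_img_eq:
  assumes "\<And>x y. x \<in> A \<Longrightarrow> y \<in> A \<Longrightarrow> f x = f y \<longleftrightarrow> g x = g y"
  shows "card (f ` A) = card (g ` A)"
proof -
  define h where "h = (\<lambda>z. g (inv_into A f z))"
  have hf: "h (f x) = g x" if "x \<in> A" for x
  proof -
    have "inv_into A f (f x) \<in> A" "f (inv_into A f (f x)) = f x"
      using that by (auto intro: inv_into_into f_inv_into_f)
    then show ?thesis unfolding h_def using assms that by blast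
  qed
  have "inj_on h (f ` A)"
  proof (rule inj_onI)
    fix u v assume "u \<in> f ` A" "v \<in> f ` A" "h u = h v"
    then obtain x y where "x \<in> A" "y \<in> A" "u = f x" "v = f y" "g x = g y" using hf by auto
    then show "u = v" using assms by auto
  qed
  moreover have "h ` f ` A = g ` A" using hf by (auto simp: image_image)
  ultimately show ?thesis by (metis card_image)
qed

lemma ncomp_pos:
  assumes "is_lgraph (F, l)"
  shows "num_components F \<ge> 1"
proof -
  have "l < fst F" using assms by (auto simp: is_lgraph_def)
  then have "(\<lambda>x. conn_rel F `` {x}) ` {0..<fst F} \<noteq> {}" by auto
  then show ?thesis unfolding num_components_def quot_img
    by (simp add: Suc_leI card_gt_0_iff)
qed

lemma ncomp_glue:
  assumes L1: "is_lgraph (F1, l1)" and L2: "is_lgraph (F2, l2)"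
  shows "num_components (glue (F1, l1) (F2, l2)) + 1 = num_components F1 + num_components F2"
proof -
  define k1 where "k1 = fst F1"
  define k2 where "k2 = fst F2"
  define g where "g = glue_map k1 l1 l2"
  define G where "G = glue (F1, l1) (F2, l2)"
  define S1 where "S1 = set (snd F1) \<union> (set (snd F1))\<inverse>"
  define S2 where "S2 = set (snd F2) \<union> (set (snd F2))\<inverse>"
  define SG where "SG = set (snd G) \<union> (set (snd G))\<inverse>"
  have wf1: "wf_graph F1" and l1: "l1 < k1" and wf2: "wf_graph F2" and l2: "l2 < k2"
    using assms by (auto simp: is_lgraph_def k1_def k2_def)
  have fG: "fst G = k1 + k2 - 1" and sG: "snd G = snd F1 @ map (\<lambda>(u,v). (g u, g v)) (snd F2)"
    unfolding G_def glue_eq g_def k1_def k2_def by simp_all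
  have E1: "u < k1 \<and> v < k1" if "(u,v) \<in> S1" for u v
    using that wf_edge[OF wf1] unfolding S1_def k1_def by force
  have E2: "u < k2 \<and> v < k2" if "(u,v) \<in> S2" for u v
    using that wf_edge[OF wf2] unfolding S2_def k2_def by force
  have a: "S1 \<subseteq> SG" unfolding S1_def SG_def sG by auto
  have b: "(g u, g v) \<in> SG" if "(u,v) \<in> S2" for u v
    using that unfolding S2_def SG_def sG by force
  have SGc: "(x,y) \<in> S1 \<or> (\<exists>u v. (u,v) \<in> S2 \<and> x = g u \<and> y = g v)" if "(x,y) \<in> SG" for x y
    using that unfolding S1_def S2_def SG_def sG by force
  define p1 where "p1 = (\<lambda>x. if x < k1 then x else l1)"
  have gk: "g u < k1 \<longleftrightarrow> u = l2" for u using glue_map_lt[OF l1] g_def by simp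
  have gl2: "g l2 = l1" by (simp add: g_def glue_map_def)
  have p1g: "p1 (g u) = l1" for u using gk gl2 by (auto simp: p1_def)
  have c: "(p1 x, p1 y) \<in> S1\<^sup>*" if "(x,y) \<in> SG" for x y
  proof -
    from SGc[OF that] show ?thesis
    proof
      assume "(x,y) \<in> S1" then show ?thesis using E1 by (auto simp: p1_def)
    next
      assume "\<exists>u v. (u,v) \<in> S2 \<and> x = g u \<and> y = g v" then show ?thesis using p1g by auto
    qed
  qed
  have p2g: "pi2 k1 l2 (g u) = u" for u using pi2_glue[OF l1] g_def by simp
  have d: "(pi2 k1 l2 x, pi2 k1 l2 y) \<in> S2\<^sup>*" if "(x,y) \<in> SG" for x y
  proof -
    from SGc[OF that] show ?thesis
    proof
      assume "(x,y) \<in> S1" then show ?thesis using E1 by (auto simp: pi2_def)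
    next
      assume "\<exists>u v. (u,v) \<in> S2 \<and> x = g u \<and> y = g v" then show ?thesis using p2g by auto
    qed
  qed
  have e: "(x,y) \<in> SG\<^sup>* \<longleftrightarrow> (x,y) \<in> S1\<^sup>*" if "x < k1" "y < k1" for x y
  proof
    assume "(x,y) \<in> SG\<^sup>*"
    from rtrancl_map[of SG p1 S1, OF c this] show "(x,y) \<in> S1\<^sup>*" using that by (simp add: p1_def)
  next
    assume "(x,y) \<in> S1\<^sup>*" then show "(x,y) \<in> SG\<^sup>*" using a rtrancl_mono by blast
  qed
  have f: "(g u, g v) \<in> SG\<^sup>* \<longleftrightarrow> (u,v) \<in> S2\<^sup>*" for u v
  proof
    assume "(g u, g v) \<in> SG\<^sup>*"
    from rtrancl_map[of SG "pi2 k1 l2" S2, OF d this] show "(u,v) \<in> S2\<^sup>*" by (simp add: p2g)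
  next
    assume "(u,v) \<in> S2\<^sup>*"
    from rtrancl_map[of S2 g SG, OF _ this] show "(g u, g v) \<in> SG\<^sup>*" using b by blast
  qed
  define cG where "cG = (\<lambda>x. conn_rel G `` {x})"
  have gr: "g u < k1 + k2 - 1" if "u < k2" for u using glue_map_range[OF l1 that l2] g_def by simp
  have img: "g ` ({0..<k2} - {l2}) = {k1..<k1 + k2 - 1}" using glue_bij[OF l1 l2] g_def by (simp add: bij_betw_def)
  have V: "{0..<k1 + k2 - 1} = {0..<k1} \<union> g ` {0..<k2}"
  proof -
    have "g ` {0..<k2} = insert l1 {k1..<k1 + k2 - 1}"
      using img gl2 l2 by (metis Diff_empty Diff_insert0 atLeastLessThan_iff image_insert insert_Diff zero_le)
    then show ?thesis using l1 l2 by auto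
  qed
  have QG: "{0..<fst G} // conn_rel G = cG ` {0..<k1} \<union> (cG \<circ> g) ` {0..<k2}"
  proof -
    have "{0..<fst G} // conn_rel G = cG ` {0..<fst G}" unfolding cG_def by (rule quot_img)
    also have "\<dots> = cG ` {0..<k1} \<union> (cG \<circ> g) ` {0..<k2}" unfolding fG V by (simp add: image_Un image_comp)
    finally show ?thesis .
  qed
  have C1: "card (cG ` {0..<k1}) = num_components F1"
    unfolding num_components_def quot_img k1_def[symmetric]
  proof (rule card_img_eq)
    fix x y assume "x \<in> {0..<k1}" "y \<in> {0..<k1}"
    then have xy: "x < k1" "y < k1" by auto
    have "cG x = cG y \<longleftrightarrow> (x,y) \<in> SG\<^sup>*" unfolding cG_def SG_def using xy fG l2 by (intro cls_eq) auto
    also have "\<dots> \<longleftrightarrow> (x,y) \<in> S1\<^sup>*" using e xy by simp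
    also have "\<dots> \<longleftrightarrow> conn_rel F1 `` {x} = conn_rel F1 `` {y}"
      unfolding S1_def using xy k1_def by (intro cls_eq[symmetric]) auto
    finally show "cG x = cG y \<longleftrightarrow> conn_rel F1 `` {x} = conn_rel F1 `` {y}" .
  qed
  have C2: "card ((cG \<circ> g) ` {0..<k2}) = num_components F2"
    unfolding num_components_def quot_img k2_def[symmetric]
  proof (rule card_img_eq)
    fix x y assume "x \<in> {0..<k2}" "y \<in> {0..<k2}"
    then have xy: "x < k2" "y < k2" by auto
    have "(cG \<circ> g) x = (cG \<circ> g) y \<longleftrightarrow> (g x, g y) \<in> SG\<^sup>*" unfolding cG_def SG_def o_def using xy fG gr by (intro cls_eq) auto
    also have "\<dots> \<longleftrightarrow> (x,y) \<in> S2\<^sup>*" using f by simp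
    also have "\<dots> \<longleftrightarrow> conn_rel F2 `` {x} = conn_rel F2 `` {y}"
      unfolding S2_def using xy k2_def by (intro cls_eq[symmetric]) auto
    finally show "(cG \<circ> g) x = (cG \<circ> g) y \<longleftrightarrow> conn_rel F2 `` {x} = conn_rel F2 `` {y}" .
  qed
  have I: "cG ` {0..<k1} \<inter> (cG \<circ> g) ` {0..<k2} = {cG l1}"
  proof (intro equalityI subsetI)
    fix z assume "z \<in> cG ` {0..<k1} \<inter> (cG \<circ> g) ` {0..<k2}"
    then obtain x v where x: "x < k1" and v: "v < k2" and z: "z = cG x" "z = cG (g v)" by auto
    have "(x, g v) \<in> SG\<^sup>*" using z unfolding cG_def SG_def using x gr[OF v] fG l2 by (subst cls_eq[symmetric]) auto
    from rtrancl_map[of SG "pi2 k1 l2" S2, OF d this] have "(l2, v) \<in> S2\<^sup>*"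
      using x p2g by (simp add: pi2_def)
    then have "(g l2, g v) \<in> SG\<^sup>*" using f by blast
    then have "cG l1 = cG (g v)" unfolding cG_def SG_def gl2[symmetric] using gr[OF v] gr[OF l2] fG
      by (subst cls_eq) auto
    then show "z \<in> {cG l1}" using z by simp
  next
    fix z assume "z \<in> {cG l1}"
    then show "z \<in> cG ` {0..<k1} \<inter> (cG \<circ> g) ` {0..<k2}" using l1 l2 gl2 by force
  qed
  have "card (cG ` {0..<k1}) + card ((cG \<circ> g) ` {0..<k2}) =
     card (cG ` {0..<k1} \<union> (cG \<circ> g) ` {0..<k2}) + card (cG ` {0..<k1} \<inter> (cG \<circ> g) ` {0..<k2})"
    by (rule card_Un_Int) auto
  then show ?thesis using C1 C2 I QG unfolding num_components_def G_def by simp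
qed



lemma hom_glue:
  assumes "is_lgraph (F1, l1)" "is_lgraph (F2, l2)"
  shows "hom_w (glue (F1, l1) (F2, l2)) n a B = (\<Sum>i<n. a i * (xr n a B F1 l1 i * xr n a B F2 l2 i))"
  using hom_xr[OF glue_lgraph[OF assms], where n=n and a=a and B=B] xr_glue[OF assms, where n=n and a=a and B=B] by simp

lemma h_expr:
  assumes "is_lgraph (F, l)"
  shows "h_w F n a B = hom_w F n a B / (\<Sum>i<n. a i) ^ num_components F"
  by (simp add: h_w_def)

lemma backward:
  fixes a :: "nat \<Rightarrow> 'a::field"
  assumes n: "n \<ge> 1" and S: "(\<Sum>i<n. a i) \<noteq> 0"
    and tr: "\<forall>i<n. \<forall>j<n. \<exists>\<gamma>\<in>aut_group n a B. \<gamma> i = j"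
    and L1: "is_lgraph (F1, l1)" and L2: "is_lgraph (F2, l2)"
  shows "h_w F1 n a B * h_w F2 n a B = h_w (glue (F1, l1) (F2, l2)) n a B"
proof -
  define S where "S = (\<Sum>i<n. a i)"
  have ai: "a i = a 0" if i: "i < n" for i
  proof -
    obtain \<gamma> where "\<gamma> \<in> aut_group n a B" "\<gamma> 0 = i" using tr n i by force
    then show ?thesis using n by (auto simp: aut_group_def)
  qed
  have xc: "xr n a B F l i = xr n a B F l 0" if i: "i < n" for F l i
  proof -
    obtain \<gamma> where "\<gamma> \<in> aut_group n a B" "\<gamma> 0 = i" using tr n i by force
    then show ?thesis using xr_aut[of \<gamma> n a B 0 F l] n by auto
  qed
  have Sv: "S = of_nat n * a 0"
  proof -
    have "S = (\<Sum>i<n. a 0)" unfolding S_def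
    proof (rule sum.cong[OF refl])
      fix i assume "i \<in> {..<n}" then have i: "i < n" by simp
      show "a i = a 0" by (rule ai[OF i])
    qed
    then show ?thesis by simp
  qed
  have homc: "hom_w F n a B = S * xr n a B F l 0" if "is_lgraph (F, l)" for F l
  proof -
    have "hom_w F n a B = (\<Sum>i<n. a 0 * xr n a B F l 0)"
      unfolding hom_xr[OF that]
    proof (rule sum.cong[OF refl])
      fix i assume "i \<in> {..<n}" then have i: "i < n" by simp
      show "a i * xr n a B F l i = a 0 * xr n a B F l 0" by (simp only: ai[OF i] xc[OF i])
    qed
    then show ?thesis by (simp add: Sv)
  qed
  have homG: "hom_w (glue (F1, l1) (F2, l2)) n a B = S * (xr n a B F1 l1 0 * xr n a B F2 l2 0)"
  proof -
    have "hom_w (glue (F1, l1) (F2, l2)) n a B = (\<Sum>i<n. a 0 * (xr n a B F1 l1 0 * xr n a B F2 l2 0))"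
      unfolding hom_glue[OF L1 L2]
    proof (rule sum.cong[OF refl])
      fix i assume "i \<in> {..<n}" then have i: "i < n" by simp
      show "a i * (xr n a B F1 l1 i * xr n a B F2 l2 i) = a 0 * (xr n a B F1 l1 0 * xr n a B F2 l2 0)"
        by (simp only: ai[OF i] xc[OF i])
    qed
    then show ?thesis by (simp add: Sv)
  qed
  obtain c1 where c1: "num_components F1 = Suc c1" using ncomp_pos[OF L1] by (cases "num_components F1") auto
  obtain c2 where c2: "num_components F2 = Suc c2" using ncomp_pos[OF L2] by (cases "num_components F2") auto
  have cG: "num_components (glue (F1, l1) (F2, l2)) = Suc (c1 + c2)" using ncomp_glue[OF L1 L2] c1 c2 by simp
  have S0: "S \<noteq> 0" using S S_def by simp
  show ?thesis
    unfolding h_w_def homc[OF L1] homc[OF L2] homG c1 c2 cG S_def[symmetric]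
    using S0 by (simp add: power_add)
qed

inductive_set LA :: "nat \<Rightarrow> (nat \<Rightarrow> 'a::field) \<Rightarrow> (nat \<Rightarrow> nat \<Rightarrow> 'a) \<Rightarrow> nat \<Rightarrow> ((nat \<Rightarrow> nat) \<Rightarrow> 'a) set"
  for n a B k where
  gen: "k \<le> K \<Longrightarrow> (\<forall>e\<in>set E. fst e < K \<and> snd e < K) \<Longrightarrow> lh n a B {k..<K} E \<in> LA n a B k"
| add: "f \<in> LA n a B k \<Longrightarrow> g \<in> LA n a B k \<Longrightarrow> (\<lambda>\<psi>. f \<psi> + g \<psi>) \<in> LA n a B k"
| scale: "f \<in> LA n a B k \<Longrightarrow> (\<lambda>\<psi>. c * f \<psi>) \<in> LA n a B k"

lemma LA_one: "(\<lambda>_. 1) \<in> LA n a B k"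
proof -
  have "lh n a B {k..<k} [] = (\<lambda>_. 1)" by (rule ext) (simp add: lh_def ew_def)
  then show ?thesis using LA.gen[of k k "[]" n a B] by simp
qed

lemma LA_const: "(\<lambda>_. c) \<in> LA n a B k"
  using LA.scale[OF LA_one, of c] by simp

lemma LA_edge: "u < k \<Longrightarrow> v < k \<Longrightarrow> (\<lambda>\<psi>. B (\<psi> u) (\<psi> v)) \<in> LA n a B k"
proof -
  assume uv: "u < k" "v < k"
  have "lh n a B {k..<k} [(u,v)] = (\<lambda>\<psi>. B (\<psi> u) (\<psi> v))" by (rule ext) (simp add: lh_def ew_def mrg_def)
  then show ?thesis using LA.gen[of k k "[(u,v)]" n a B] uv by simp
qed

lemma LA_diff: "f \<in> LA n a B k \<Longrightarrow> g \<in> LA n a B k \<Longrightarrow> (\<lambda>\<psi>. f \<psi> - g \<psi>) \<in> LA n a B k"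
  using LA.add[of f n a B k "\<lambda>\<psi>. (-1) * g \<psi>"] LA.scale[of g n a B k "-1"] by simp

lemma LA_affine: "f \<in> LA n a B k \<Longrightarrow> (\<lambda>\<psi>. c * f \<psi> + d) \<in> LA n a B k"
  using LA.add[OF LA.scale LA_const] by blast

lemma lh_mult_gen:
  assumes "k \<le> K1" "k \<le> K2" "\<forall>e\<in>set E1. fst e < K1 \<and> snd e < K1" "\<forall>e\<in>set E2. fst e < K2 \<and> snd e < K2"
  shows "(\<lambda>\<psi>. lh n a B {k..<K1} E1 \<psi> * lh n a B {k..<K2} E2 \<psi>) \<in> LA n a B k"
proof -
  define sh where "sh = (\<lambda>v. if v < k then v else v + K1 - k)"
  define E where "E = E1 @ map (\<lambda>(u,v). (sh u, sh v)) E2"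
  have U: "{k..<K1 + K2 - k} = {k..<K1} \<union> {K1..<K1 + K2 - k}" using assms(1,2) by auto
  have eq: "lh n a B {k..<K1 + K2 - k} E \<psi> = lh n a B {k..<K1} E1 \<psi> * lh n a B {k..<K2} E2 \<psi>" for \<psi>
  proof -
    have "lh n a B {k..<K1 + K2 - k} E \<psi> = lh n a B {k..<K1} E1 \<psi> * lh n a B {K1..<K1 + K2 - k} (map (\<lambda>(u,v). (sh u, sh v)) E2) \<psi>"
      unfolding U E_def
    proof (rule lh_prod)
      fix e assume "e \<in> set E1"
      then show "fst e \<notin> {K1..<K1 + K2 - k} \<and> snd e \<notin> {K1..<K1 + K2 - k}" using assms(3) by auto
    next
      fix e assume "e \<in> set (map (\<lambda>(u,v). (sh u, sh v)) E2)"
      then obtain u v where "e = (sh u, sh v)" by auto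
      moreover have "sh w \<notin> {k..<K1}" for w using assms(1) by (auto simp: sh_def)
      ultimately show "fst e \<notin> {k..<K1} \<and> snd e \<notin> {k..<K1}" by auto
    qed auto
    also have "lh n a B {K1..<K1 + K2 - k} (map (\<lambda>(u,v). (sh u, sh v)) E2) \<psi> = lh n a B {k..<K2} E2 (\<psi> \<circ> sh)"
    proof (rule lh_rename)
      show "bij_betw sh {k..<K2} {K1..<K1 + K2 - k}"
        by (rule bij_betw_byWitness[where f'="\<lambda>x. x + k - K1"]) (use assms(1,2) in \<open>auto simp: sh_def\<close>)
      fix e v assume "e \<in> set E2" "v = fst e \<or> v = snd e" "sh v \<in> {K1..<K1 + K2 - k}"
      then show "v \<in> {k..<K2}" using assms(1,4) by (auto simp: sh_def split: if_splits)
    qed simp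
    also have "\<dots> = lh n a B {k..<K2} E2 \<psi>"
      by (rule lh_cong) (use assms(4) in \<open>force simp: sh_def\<close>)
    finally show ?thesis .
  qed
  have "lh n a B {k..<K1 + K2 - k} E \<in> LA n a B k"
  proof (rule LA.gen)
    show "k \<le> K1 + K2 - k" using assms by simp
    show "\<forall>e\<in>set E. fst e < K1 + K2 - k \<and> snd e < K1 + K2 - k"
      using assms unfolding E_def sh_def by force
  qed
  moreover have "lh n a B {k..<K1 + K2 - k} E = (\<lambda>\<psi>. lh n a B {k..<K1} E1 \<psi> * lh n a B {k..<K2} E2 \<psi>)"
    using eq by (rule ext)
  ultimately show ?thesis by simp
qed

lemma LA_mult_gen:
  assumes "k \<le> K1" "\<forall>e\<in>set E1. fst e < K1 \<and> snd e < K1" "g \<in> LA n a B k"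
  shows "(\<lambda>\<psi>. lh n a B {k..<K1} E1 \<psi> * g \<psi>) \<in> LA n a B k"
  using assms(3)
proof induction
  case (gen K E)
  then show ?case using lh_mult_gen assms(1,2) by blast
next
  case (add f g)
  then show ?case using LA.add[OF add.IH] by (simp add: distrib_left)
next
  case (scale f c)
  then show ?case using LA.scale[OF scale.IH, of c] by (simp add: mult.left_commute)
qed

lemma LA_mult:
  assumes "f \<in> LA n a B k" "g \<in> LA n a B k"
  shows "(\<lambda>\<psi>. f \<psi> * g \<psi>) \<in> LA n a B k"
  using assms(1)
proof induction
  case (gen K E)
  then show ?case using LA_mult_gen assms(2) by blast
next
  case (add f1 f2)
  then show ?case using LA.add[OF add.IH] by (simp add: distrib_right)
next
  case (scale f c)
  then show ?case using LA.scale[OF scale.IH, of c] by (simp add: mult.assoc)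
qed

lemma LA_prod:
  assumes "finite I" "\<And>i. i \<in> I \<Longrightarrow> f i \<in> LA n a B k"
  shows "(\<lambda>\<psi>. \<Prod>i\<in>I. f i \<psi>) \<in> LA n a B k"
  using assms
proof (induction I rule: finite_induct)
  case empty
  then show ?case using LA_one by simp
next
  case (insert x F)
  then show ?case using LA_mult[of "f x" n a B k "\<lambda>\<psi>. \<Prod>i\<in>F. f i \<psi>"] by simp
qed

definition Unl :: "nat \<Rightarrow> (nat \<Rightarrow> 'a::comm_ring_1) \<Rightarrow> nat \<Rightarrow> nat \<Rightarrow> ((nat \<Rightarrow> nat) \<Rightarrow> 'a) \<Rightarrow> (nat \<Rightarrow> nat) \<Rightarrow> 'a" where
  "Unl n a k m f \<psi> = (\<Sum>\<chi>\<in>{k..<m} \<rightarrow>\<^sub>E {..<n}. (\<Prod>u\<in>{k..<m}. a (\<chi> u)) * f (mrg {k..<m} \<chi> \<psi>))"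

lemma LA_Unl:
  assumes "k \<le> m" "f \<in> LA n a B m"
  shows "Unl n a k m f \<in> LA n a B k"
  using assms(2)
proof induction
  case (gen K E)
  have U: "{k..<K} = {k..<m} \<union> {m..<K}" using gen assms(1) by auto
  have "Unl n a k m (lh n a B {m..<K} E) = lh n a B {k..<K} E"
    unfolding Unl_def U by (rule ext, rule lh_split[symmetric]) auto
  moreover have "lh n a B {k..<K} E \<in> LA n a B k" using gen assms(1) by (intro LA.gen) auto
  ultimately show ?case by simp
next
  case (add f g)
  have "Unl n a k m (\<lambda>\<psi>. f \<psi> + g \<psi>) = (\<lambda>\<psi>. Unl n a k m f \<psi> + Unl n a k m g \<psi>)"
    unfolding Unl_def by (rule ext) (simp add: distrib_left sum.distrib)
  then show ?case using LA.add[OF add.IH] by simp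
next
  case (scale f c)
  have "Unl n a k m (\<lambda>\<psi>. c * f \<psi>) = (\<lambda>\<psi>. c * Unl n a k m f \<psi>)"
    unfolding Unl_def by (rule ext) (simp add: sum_distrib_left mult.left_commute)
  then show ?case using LA.scale[OF scale.IH] by simp
qed

lemma Unl_single:
  "Unl n a k (Suc k) f \<psi> = (\<Sum>w<n. a w * f (\<psi>(k := w)))"
proof -
  have "mrg {k} \<chi> \<psi> = \<psi>(k := \<chi> k)" for \<chi> by (auto simp: mrg_def fun_eq_iff)
  then have "Unl n a k (Suc k) f \<psi> = (\<Sum>\<chi>\<in>{k} \<rightarrow>\<^sub>E {..<n}. a (\<chi> k) * f (\<psi>(k := \<chi> k)))"
    by (simp add: Unl_def)
  also have "\<dots> = (\<Sum>w<n. a w * f (\<psi>(k := w)))" by (rule sum_PiE_single)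
  finally show ?thesis .
qed



lemma aut_id: "id \<in> aut_group n a B"
  by (simp add: aut_group_def)

lemma aut_comp:
  assumes "g1 \<in> aut_group n a B" "g2 \<in> aut_group n a B"
  shows "g1 \<circ> g2 \<in> aut_group n a B"
proof -
  have "g1 \<circ> g2 permutes {0..<n}" using assms by (auto simp: aut_group_def intro: permutes_compose)
  moreover have "a (g1 (g2 i)) = a i" if "i < n" for i
    using assms aut_lt[OF assms(2) that] that by (simp add: aut_group_def)
  moreover have "B (g1 (g2 i)) (g1 (g2 j)) = B i j" if "i < n" "j < n" for i j
    using assms aut_lt[OF assms(2) that(1)] aut_lt[OF assms(2) that(2)] that by (simp add: aut_group_def)
  ultimately show ?thesis by (simp add: aut_group_def)
qed

lemma aut_inv:
  assumes g: "g \<in> aut_group n a B"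
  shows "inv g \<in> aut_group n a B"
proof -
  have p: "g permutes {0..<n}" using g by (simp add: aut_group_def)
  have pi: "inv g permutes {0..<n}" using p by (rule permutes_inv)
  have lt: "inv g i < n" if "i < n" for i using permutes_in_image[OF pi, of i] that by simp
  have "a (inv g i) = a i" if "i < n" for i
  proof -
    have "a (g (inv g i)) = a (inv g i)" using g lt[OF that] by (simp add: aut_group_def)
    then show ?thesis by (simp add: permutes_inverses[OF p])
  qed
  moreover have "B (inv g i) (inv g j) = B i j" if "i < n" "j < n" for i j
  proof -
    have "B (g (inv g i)) (g (inv g j)) = B (inv g i) (inv g j)" using g lt that by (simp add: aut_group_def)
    then show ?thesis by (simp add: permutes_inverses[OF p])
  qed
  ultimately show ?thesis using pi by (simp add: aut_group_def)
qed

definition sig :: "nat \<Rightarrow> (nat \<Rightarrow> nat \<Rightarrow> 'a) \<Rightarrow> (nat \<Rightarrow> nat) \<Rightarrow> nat \<Rightarrow> nat \<Rightarrow> nat" where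
  "sig n B \<tau> p q = (SOME r. r < n \<and> B (\<tau> r) (\<tau> p) \<noteq> B (\<tau> r) (\<tau> q))"

lemma sig_spec:
  assumes tf: "twin_free n B" and sym: "\<forall>i<n. \<forall>j<n. B i j = B j i"
    and bij: "bij_betw \<tau> {..<n} {..<n}" and pq: "p < n" "q < n" "p \<noteq> q"
  shows "sig n B \<tau> p q < n \<and> B (\<tau> (sig n B \<tau> p q)) (\<tau> p) \<noteq> B (\<tau> (sig n B \<tau> p q)) (\<tau> q)"
proof -
  have tp: "\<tau> p < n" "\<tau> q < n" "\<tau> p \<noteq> \<tau> q" using bij pq by (auto simp: bij_betw_def inj_on_def)
  obtain k where k: "k < n" "B (\<tau> p) k \<noteq> B (\<tau> q) k" using tf tp unfolding twin_free_def by blast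
  have "k \<in> \<tau> ` {..<n}" using bij k(1) by (simp add: bij_betw_def)
  then obtain r where r: "r < n" "\<tau> r = k" by auto
  have "B (\<tau> r) (\<tau> p) \<noteq> B (\<tau> r) (\<tau> q)" using sym k r tp by metis
  then have "\<exists>r. r < n \<and> B (\<tau> r) (\<tau> p) \<noteq> B (\<tau> r) (\<tau> q)" using r by blast
  then show ?thesis unfolding sig_def by (rule someI_ex)
qed

definition tst :: "nat \<Rightarrow> (nat \<Rightarrow> 'a::field) \<Rightarrow> (nat \<Rightarrow> nat \<Rightarrow> 'a) \<Rightarrow> (nat \<Rightarrow> nat) \<Rightarrow> (nat \<times> nat) + nat \<Rightarrow> (nat \<Rightarrow> nat) \<Rightarrow> 'a" where
  "tst n a B \<tau> i \<psi> = (case i of Inl uv \<Rightarrow> B (\<psi> (fst uv)) (\<psi> (snd uv))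
     | Inr p \<Rightarrow> (\<Sum>w<n. a w * (\<Prod>q\<in>{..<n} - {p}. B (\<psi> (sig n B \<tau> p q)) w - B (\<psi> (sig n B \<tau> p q)) (\<psi> q))))"

definition TI :: "nat \<Rightarrow> ((nat \<times> nat) + nat) set" where
  "TI n = ({..<n} \<times> {..<n}) <+> {..<n}"

lemma finite_TI: "finite (TI n)" by (simp add: TI_def)

locale orbset =
  fixes n :: nat and a :: "nat \<Rightarrow> 'a::field_char_0" and B :: "nat \<Rightarrow> nat \<Rightarrow> 'a" and \<tau> :: "nat \<Rightarrow> nat"
  assumes n: "n \<ge> 1" and anz: "\<forall>i<n. a i \<noteq> 0" and sym: "\<forall>i<n. \<forall>j<n. B i j = B j i"
    and tf: "twin_free n B" and bij: "bij_betw \<tau> {..<n} {..<n}"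
begin

abbreviation "s \<equiv> sig n B \<tau>"
abbreviation "T \<equiv> tst n a B \<tau>"

lemma s_lt: "p < n \<Longrightarrow> q < n \<Longrightarrow> p \<noteq> q \<Longrightarrow> s p q < n"
  using sig_spec[OF tf sym bij] by blast

lemma s_ne: "p < n \<Longrightarrow> q < n \<Longrightarrow> p \<noteq> q \<Longrightarrow> B (\<tau> (s p q)) (\<tau> p) \<noteq> B (\<tau> (s p q)) (\<tau> q)"
  using sig_spec[OF tf sym bij] by blast

lemma tau_lt: "u < n \<Longrightarrow> \<tau> u < n" using bij by (auto simp: bij_betw_def)

lemma tst_LA:
  assumes "i \<in> TI n"
  shows "T i \<in> LA n a B n"
proof (cases i)
  case (Inl uv)
  then have "fst uv < n" "snd uv < n" using assms by (auto simp: TI_def)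
  then have "(\<lambda>\<psi>. B (\<psi> (fst uv)) (\<psi> (snd uv))) \<in> LA n a B n" by (rule LA_edge)
  moreover have "T i = (\<lambda>\<psi>. B (\<psi> (fst uv)) (\<psi> (snd uv)))" using Inl by (simp add: tst_def fun_eq_iff)
  ultimately show ?thesis by simp
next
  case (Inr p)
  then have p: "p < n" using assms by (auto simp: TI_def)
  define f where "f = (\<lambda>\<psi>. \<Prod>q\<in>{..<n} - {p}. B (\<psi> (s p q)) (\<psi> n) - B (\<psi> (s p q)) (\<psi> q))"
  have "f \<in> LA n a B (Suc n)"
    unfolding f_def
  proof (rule LA_prod)
    fix q assume q: "q \<in> {..<n} - {p}"
    then have "s p q < Suc n" "q < Suc n" using s_lt[OF p, of q] by auto
    then show "(\<lambda>\<psi>. B (\<psi> (s p q)) (\<psi> n) - B (\<psi> (s p q)) (\<psi> q)) \<in> LA n a B (Suc n)"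
      by (intro LA_diff LA_edge) auto
  qed simp
  then have "Unl n a n (Suc n) f \<in> LA n a B n" by (intro LA_Unl) auto
  moreover have "Unl n a n (Suc n) f = T i"
  proof (rule ext)
    fix \<psi>
    have "Unl n a n (Suc n) f \<psi> = (\<Sum>w<n. a w * f (\<psi>(n := w)))" by (rule Unl_single)
    also have "\<dots> = T i \<psi>"
    proof -
      have eqf: "f (\<psi>(n := w)) = (\<Prod>q\<in>{..<n} - {p}. B (\<psi> (s p q)) w - B (\<psi> (s p q)) (\<psi> q))" for w
        unfolding f_def
      proof (rule prod.cong[OF refl])
        fix q assume "q \<in> {..<n} - {p}"
        then have "s p q \<noteq> n" "q \<noteq> n" using s_lt[OF p, of q] by auto
        then show "B ((\<psi>(n := w)) (s p q)) ((\<psi>(n := w)) n) - B ((\<psi>(n := w)) (s p q)) ((\<psi>(n := w)) q)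
           = B (\<psi> (s p q)) w - B (\<psi> (s p q)) (\<psi> q)" by simp
      qed
      show ?thesis unfolding eqf by (simp add: Inr tst_def)
    qed
    finally show "Unl n a n (Suc n) f \<psi> = T i \<psi>" .
  qed
  ultimately show ?thesis by simp
qed

lemma tst_local:
  assumes "i \<in> TI n" "\<And>u. u < n \<Longrightarrow> \<psi> u = \<psi>' u"
  shows "T i \<psi> = T i \<psi>'"
proof (cases i)
  case (Inl uv)
  then show ?thesis using assms by (auto simp: tst_def TI_def)
next
  case (Inr p)
  then have p: "p < n" using assms by (auto simp: TI_def)
  have "(\<Prod>q\<in>{..<n} - {p}. B (\<psi> (s p q)) w - B (\<psi> (s p q)) (\<psi> q)) =
        (\<Prod>q\<in>{..<n} - {p}. B (\<psi>' (s p q)) w - B (\<psi>' (s p q)) (\<psi>' q))" for w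
    by (rule prod.cong[OF refl]) (use assms(2) s_lt[OF p] in auto)
  then show ?thesis using Inr by (simp add: tst_def)
qed

definition bijl :: "(nat \<Rightarrow> nat) \<Rightarrow> bool" where
  "bijl \<psi> \<longleftrightarrow> inj_on \<psi> {..<n} \<and> \<psi> ` {..<n} = {..<n}"

lemma survive:
  assumes b: "bijl \<psi>" and p: "p < n"
  shows "T (Inr p) \<psi> = a (\<psi> p) * (\<Prod>q\<in>{..<n} - {p}. B (\<psi> (s p q)) (\<psi> p) - B (\<psi> (s p q)) (\<psi> q))"
proof -
  define tm where "tm = (\<lambda>w. a w * (\<Prod>q\<in>{..<n} - {p}. B (\<psi> (s p q)) w - B (\<psi> (s p q)) (\<psi> q)))"
  have pp: "\<psi> p \<in> {..<n}" using b p by (auto simp: bijl_def)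
  have z: "tm w = 0" if "w \<in> {..<n} - {\<psi> p}" for w
  proof -
    have "w \<in> \<psi> ` {..<n}" using that b by (simp add: bijl_def)
    then obtain q where q: "q < n" "\<psi> q = w" by auto
    then have "q \<noteq> p" using that by auto
    then have "(\<Prod>q\<in>{..<n} - {p}. B (\<psi> (s p q)) w - B (\<psi> (s p q)) (\<psi> q)) = 0"
      using q by (intro prod_zero) auto
    then show ?thesis by (simp add: tm_def)
  qed
  have "T (Inr p) \<psi> = sum tm {..<n}" by (simp add: tst_def tm_def)
  also have "\<dots> = tm (\<psi> p) + sum tm ({..<n} - {\<psi> p})" using pp by (simp add: sum.remove)
  also have "sum tm ({..<n} - {\<psi> p}) = 0" using z by simp
  finally show ?thesis by (simp add: tm_def)
qed

lemma bijl_tau: "bijl \<tau>" using bij by (simp add: bijl_def bij_betw_def)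

lemma D_nz: "p < n \<Longrightarrow> (\<Prod>q\<in>{..<n} - {p}. B (\<tau> (s p q)) (\<tau> p) - B (\<tau> (s p q)) (\<tau> q)) \<noteq> 0"
  using s_ne by (auto simp: prod_zero_iff)

definition agree :: "(nat \<Rightarrow> nat) \<Rightarrow> bool" where
  "agree \<psi> \<longleftrightarrow> (\<forall>i\<in>TI n. T i \<psi> = T i \<tau>)"

lemma agree_of_aut:
  assumes g: "\<gamma> \<in> aut_group n a B" and e: "\<And>u. u < n \<Longrightarrow> \<psi> u = \<gamma> (\<tau> u)"
  shows "agree \<psi>"
  unfolding agree_def
proof
  have perm: "\<gamma> permutes {0..<n}" and ga: "\<And>i. i < n \<Longrightarrow> a (\<gamma> i) = a i"
    and gB: "\<And>i j. i < n \<Longrightarrow> j < n \<Longrightarrow> B (\<gamma> i) (\<gamma> j) = B i j" using g by (auto simp: aut_group_def)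
  have Bpsi: "B (\<psi> u) (\<psi> v) = B (\<tau> u) (\<tau> v)" if "u < n" "v < n" for u v
    using e[OF that(1)] e[OF that(2)] gB tau_lt that by simp
  fix i assume i: "i \<in> TI n"
  show "T i \<psi> = T i \<tau>"
  proof (cases i)
    case (Inl uv)
    then show ?thesis using i Bpsi by (auto simp: tst_def TI_def)
  next
    case (Inr p)
    then have p: "p < n" using i by (auto simp: TI_def)
    have bp: "bijl \<psi>"
    proof -
      have "inj_on (\<gamma> \<circ> \<tau>) {..<n}"
        using bij permutes_inj_on[OF perm] by (auto simp: bij_betw_def intro: comp_inj_on)
      moreover have "(\<gamma> \<circ> \<tau>) ` {..<n} = {..<n}"
      proof -
        have "(\<gamma> \<circ> \<tau>) ` {..<n} = \<gamma> ` (\<tau> ` {..<n})" by (rule image_comp[symmetric])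
        also have "\<tau> ` {..<n} = {..<n}" using bij by (simp add: bij_betw_def)
        also have "\<gamma> ` {..<n} = {..<n}" using permutes_image[OF perm] by (simp add: atLeast0LessThan)
        finally show ?thesis .
      qed
      moreover have "inj_on \<psi> {..<n} = inj_on (\<gamma> \<circ> \<tau>) {..<n}" using e by (intro inj_on_cong) auto
      moreover have "\<psi> ` {..<n} = (\<gamma> \<circ> \<tau>) ` {..<n}" using e by (intro image_cong) auto
      ultimately show ?thesis by (simp add: bijl_def)
    qed
    have "a (\<psi> p) = a (\<tau> p)" using e[OF p] ga tau_lt[OF p] by simp
    moreover have "(\<Prod>q\<in>{..<n} - {p}. B (\<psi> (s p q)) (\<psi> p) - B (\<psi> (s p q)) (\<psi> q)) =
        (\<Prod>q\<in>{..<n} - {p}. B (\<tau> (s p q)) (\<tau> p) - B (\<tau> (s p q)) (\<tau> q))"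
      by (rule prod.cong[OF refl]) (use Bpsi s_lt p in auto)
    ultimately show ?thesis using survive[OF bp p] survive[OF bijl_tau p] Inr by simp
  qed
qed

lemma aut_of_agree:
  assumes ag: "agree \<psi>" and lt: "\<And>u. u < n \<Longrightarrow> \<psi> u < n"
  shows "\<exists>\<gamma>\<in>aut_group n a B. \<forall>u<n. \<psi> u = \<gamma> (\<tau> u)"
proof -
  have TB: "B (\<psi> u) (\<psi> v) = B (\<tau> u) (\<tau> v)" if "u < n" "v < n" for u v
    using ag that unfolding agree_def TI_def by (force simp: tst_def)
  have inj: "inj_on \<psi> {..<n}"
  proof (rule inj_onI, rule ccontr)
    fix p q assume pq: "p \<in> {..<n}" "q \<in> {..<n}" "\<psi> p = \<psi> q" "p \<noteq> q"
    then have "B (\<tau> (s p q)) (\<tau> p) = B (\<tau> (s p q)) (\<tau> q)"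
      using TB[of "s p q" p] TB[of "s p q" q] s_lt[of p q] by auto
    then show False using s_ne[of p q] pq by auto
  qed
  have im: "\<psi> ` {..<n} = {..<n}"
  proof (rule card_subset_eq)
    show "\<psi> ` {..<n} \<subseteq> {..<n}" using lt by auto
    show "card (\<psi> ` {..<n}) = card {..<n}" using card_image[OF inj] by simp
  qed simp
  have bp: "bijl \<psi>" using inj im by (simp add: bijl_def)
  define ti where "ti = inv_into {..<n} \<tau>"
  have ti: "ti x < n" "\<tau> (ti x) = x" if "x < n" for x
  proof -
    have "x \<in> \<tau> ` {..<n}" using bij that by (simp add: bij_betw_def)
    then show "ti x < n" "\<tau> (ti x) = x" unfolding ti_def
      using inv_into_into[of x \<tau> "{..<n}"] f_inv_into_f[of x \<tau> "{..<n}"] by auto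
  qed
  have tit: "ti (\<tau> u) = u" if "u < n" for u
    using bij that unfolding ti_def bij_betw_def by (auto intro: inv_into_f_f)
  define \<gamma> where "\<gamma> = (\<lambda>v. if v < n then \<psi> (ti v) else v)"
  have bg: "bij_betw \<gamma> {..<n} {..<n}"
  proof -
    have "bij_betw ti {..<n} {..<n}" unfolding ti_def using bij by (rule bij_betw_inv_into)
    moreover have "bij_betw \<psi> {..<n} {..<n}" using inj im by (simp add: bij_betw_def)
    ultimately have "bij_betw (\<psi> \<circ> ti) {..<n} {..<n}" by (rule bij_betw_trans)
    moreover have "\<And>v. v \<in> {..<n} \<Longrightarrow> (\<psi> \<circ> ti) v = \<gamma> v" by (simp add: \<gamma>_def)
    ultimately show ?thesis using bij_betw_cong by blast
  qed
  have perm: "\<gamma> permutes {0..<n}"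
    using bij_imp_permutes[of \<gamma> "{0..<n}"] bg by (simp add: atLeast0LessThan \<gamma>_def)
  have gt: "\<gamma> (\<tau> u) = \<psi> u" if "u < n" for u
    using that tau_lt[OF that] tit[OF that] by (simp add: \<gamma>_def)
  have gB: "B (\<gamma> x) (\<gamma> y) = B x y" if "x < n" "y < n" for x y
    using TB[OF ti(1)[OF that(1)] ti(1)[OF that(2)]] ti[OF that(1)] ti[OF that(2)] that by (simp add: \<gamma>_def)
  have ga: "a (\<gamma> x) = a x" if x: "x < n" for x
  proof -
    define p where "p = ti x"
    have p: "p < n" "\<tau> p = x" using ti[OF x] p_def by auto
    have "T (Inr p) \<psi> = T (Inr p) \<tau>" using ag p unfolding agree_def TI_def by auto
    moreover have "(\<Prod>q\<in>{..<n} - {p}. B (\<psi> (s p q)) (\<psi> p) - B (\<psi> (s p q)) (\<psi> q)) =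
        (\<Prod>q\<in>{..<n} - {p}. B (\<tau> (s p q)) (\<tau> p) - B (\<tau> (s p q)) (\<tau> q))"
      by (rule prod.cong[OF refl]) (use TB s_lt p in auto)
    ultimately have "a (\<psi> p) = a (\<tau> p)"
      using survive[OF bp p(1)] survive[OF bijl_tau p(1)] D_nz[OF p(1)] by simp
    then show ?thesis using gt[OF p(1)] p by simp
  qed
  have "\<gamma> \<in> aut_group n a B" using perm gB ga by (simp add: aut_group_def)
  moreover have "\<forall>u<n. \<psi> u = \<gamma> (\<tau> u)" using gt by simp
  ultimately show ?thesis by blast
qed

end



context orbset begin

definition Psi1 :: "(nat \<Rightarrow> nat) set" where
  "Psi1 = {\<psi>. \<forall>u. (u < n \<longrightarrow> \<psi> u < n) \<and> (\<not> u < n \<longrightarrow> \<psi> u = 0)}"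

lemma finite_Psi1: "finite Psi1"
proof -
  have "Psi1 \<subseteq> (\<lambda>\<chi> u. if u < n then \<chi> u else 0) ` ({..<n} \<rightarrow>\<^sub>E {..<n})"
  proof
    fix \<psi> assume p: "\<psi> \<in> Psi1"
    then have "\<psi> = (\<lambda>u. if u < n then restrict \<psi> {..<n} u else 0)" by (auto simp: Psi1_def fun_eq_iff)
    moreover have "restrict \<psi> {..<n} \<in> {..<n} \<rightarrow>\<^sub>E {..<n}" using p by (auto simp: Psi1_def)
    ultimately show "\<psi> \<in> (\<lambda>\<chi> u. if u < n then \<chi> u else 0) ` ({..<n} \<rightarrow>\<^sub>E {..<n})" by blast
  qed
  moreover have "finite ((\<lambda>\<chi> u. if u < n then \<chi> u else 0) ` ({..<n} \<rightarrow>\<^sub>E {..<n}))"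
    by (intro finite_imageI finite_PiE) auto
  ultimately show ?thesis by (rule finite_subset)
qed

definition vals :: "(nat \<times> nat) + nat \<Rightarrow> 'a set" where
  "vals i = T i ` Psi1"

lemma finite_vals: "finite (vals i)" unfolding vals_def using finite_Psi1 by simp

definition Ind :: "(nat \<Rightarrow> nat) \<Rightarrow> 'a" where
  "Ind \<psi> = (\<Prod>i\<in>TI n. \<Prod>v\<in>vals i - {T i \<tau>}. (T i \<psi> - v) / (T i \<tau> - v))"

lemma LA_affdiv: "f \<in> LA n a B k \<Longrightarrow> (\<lambda>\<psi>. (f \<psi> - v) / d) \<in> LA n a B k"
proof -
  assume f: "f \<in> LA n a B k"
  have eq: "(\<lambda>\<psi>. (1 / d) * f \<psi> + (- v / d)) = (\<lambda>\<psi>. (f \<psi> - v) / d)"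
    by (rule ext) (simp add: diff_divide_distrib)
  show ?thesis by (subst eq[symmetric]) (rule LA_affine[OF f])
qed

lemma Ind_LA: "Ind \<in> LA n a B n"
proof -
  have "(\<lambda>\<psi>. \<Prod>i\<in>TI n. \<Prod>v\<in>vals i - {T i \<tau>}. (T i \<psi> - v) / (T i \<tau> - v)) \<in> LA n a B n"
  proof (rule LA_prod[OF finite_TI])
    fix i assume i: "i \<in> TI n"
    show "(\<lambda>\<psi>. \<Prod>v\<in>vals i - {T i \<tau>}. (T i \<psi> - v) / (T i \<tau> - v)) \<in> LA n a B n"
    proof (rule LA_prod)
      show "finite (vals i - {T i \<tau>})" using finite_vals by simp
      fix v show "(\<lambda>\<psi>. (T i \<psi> - v) / (T i \<tau> - v)) \<in> LA n a B n" by (rule LA_affdiv[OF tst_LA[OF i]])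
    qed
  qed
  moreover have "Ind = (\<lambda>\<psi>. \<Prod>i\<in>TI n. \<Prod>v\<in>vals i - {T i \<tau>}. (T i \<psi> - v) / (T i \<tau> - v))"
    by (rule ext) (simp add: Ind_def)
  ultimately show ?thesis by simp
qed

lemma T_in_vals:
  assumes "i \<in> TI n" "\<And>u. u < n \<Longrightarrow> \<psi> u < n"
  shows "T i \<psi> \<in> vals i"
proof -
  define c where "c = (\<lambda>u. if u < n then \<psi> u else 0)"
  have "c \<in> Psi1" using assms(2) by (auto simp: c_def Psi1_def)
  moreover have "T i \<psi> = T i c" by (rule tst_local[OF assms(1)]) (simp add: c_def)
  ultimately show ?thesis by (simp add: vals_def)
qed

lemma Ind_val:
  assumes "\<And>u. u < n \<Longrightarrow> \<psi> u < n"
  shows "Ind \<psi> = (if agree \<psi> then 1 else 0)"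
proof (cases "agree \<psi>")
  case True
  then have "Ind \<psi> = (\<Prod>i\<in>TI n. \<Prod>v\<in>vals i - {T i \<tau>}. 1)"
    unfolding Ind_def agree_def by (intro prod.cong refl) auto
  then show ?thesis using True by simp
next
  case False
  then obtain i where i: "i \<in> TI n" "T i \<psi> \<noteq> T i \<tau>" by (auto simp: agree_def)
  have "T i \<psi> \<in> vals i - {T i \<tau>}" using T_in_vals[OF i(1) assms] i(2) by simp
  then have "(\<Prod>v\<in>vals i - {T i \<tau>}. (T i \<psi> - v) / (T i \<tau> - v)) = 0"
    using finite_vals by (intro prod_zero) auto
  then have "Ind \<psi> = 0" unfolding Ind_def using i(1) finite_TI by (intro prod_zero) auto
  then show ?thesis using False by simp
qed

definition G :: "(nat \<Rightarrow> nat) \<Rightarrow> 'a" where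
  "G = Unl n a 1 n Ind"

lemma G_LA: "G \<in> LA n a B 1"
  unfolding G_def using n Ind_LA by (intro LA_Unl) auto

lemma G_val:
  assumes x: "x < n"
  shows "G (\<lambda>_. x) \<noteq> 0 \<longleftrightarrow> (\<exists>\<gamma>\<in>aut_group n a B. \<gamma> (\<tau> 0) = x)"
proof -
  define P where "P = {1..<n} \<rightarrow>\<^sub>E {..<n}"
  define ps where "ps = (\<lambda>\<chi>. mrg {1..<n} \<chi> (\<lambda>_. x))"
  define c where "c = (\<Prod>u\<in>{1..<n}. a (\<tau> u))"
  have psl: "ps \<chi> u < n" if "\<chi> \<in> P" "u < n" for \<chi> u
    using that x by (auto simp: ps_def mrg_def P_def PiE_iff)
  have ps0: "ps \<chi> 0 = x" for \<chi> by (simp add: ps_def mrg_def)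
  have c0: "c \<noteq> 0" unfolding c_def using anz tau_lt by (auto simp: prod_zero_iff)
  have tm: "(\<Prod>u\<in>{1..<n}. a (\<chi> u)) * Ind (ps \<chi>) = (if agree (ps \<chi>) then c else 0)" if ch: "\<chi> \<in> P" for \<chi>
  proof (cases "agree (ps \<chi>)")
    case True
    then obtain \<gamma> where g: "\<gamma> \<in> aut_group n a B" "\<forall>u<n. ps \<chi> u = \<gamma> (\<tau> u)"
      using aut_of_agree psl[OF ch] by blast
    have "(\<Prod>u\<in>{1..<n}. a (\<chi> u)) = c" unfolding c_def
    proof (rule prod.cong[OF refl])
      fix u assume u: "u \<in> {1..<n}"
      then have "\<chi> u = \<gamma> (\<tau> u)" using g(2) by (auto simp: ps_def mrg_def)
      then show "a (\<chi> u) = a (\<tau> u)" using g(1) tau_lt u by (auto simp: aut_group_def)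
    qed
    then show ?thesis using True Ind_val[OF psl[OF ch]] by simp
  next
    case False
    then show ?thesis using Ind_val[OF psl[OF ch]] by simp
  qed
  have "G (\<lambda>_. x) = (\<Sum>\<chi>\<in>P. (\<Prod>u\<in>{1..<n}. a (\<chi> u)) * Ind (ps \<chi>))"
    by (simp add: G_def Unl_def P_def ps_def)
  also have "\<dots> = (\<Sum>\<chi>\<in>P. if agree (ps \<chi>) then c else 0)" using tm by (rule sum.cong[OF refl])
  also have "\<dots> = (\<Sum>\<chi>\<in>{\<chi>\<in>P. agree (ps \<chi>)}. c)"
    by (rule sum.inter_filter[symmetric]) (simp add: P_def finite_PiE)
  also have "\<dots> = of_nat (card {\<chi>\<in>P. agree (ps \<chi>)}) * c" by simp
  finally have Gx: "G (\<lambda>_. x) = of_nat (card {\<chi>\<in>P. agree (ps \<chi>)}) * c" .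
  have fin: "finite {\<chi>\<in>P. agree (ps \<chi>)}" by (simp add: P_def finite_PiE)
  have "G (\<lambda>_. x) \<noteq> 0 \<longleftrightarrow> {\<chi>\<in>P. agree (ps \<chi>)} \<noteq> {}"
    using Gx c0 fin by simp
  also have "\<dots> \<longleftrightarrow> (\<exists>\<gamma>\<in>aut_group n a B. \<gamma> (\<tau> 0) = x)"
  proof
    assume "{\<chi>\<in>P. agree (ps \<chi>)} \<noteq> {}"
    then obtain \<chi> where ch: "\<chi> \<in> P" "agree (ps \<chi>)" by auto
    then obtain \<gamma> where "\<gamma> \<in> aut_group n a B" "\<forall>u<n. ps \<chi> u = \<gamma> (\<tau> u)"
      using aut_of_agree psl[OF ch(1)] by blast
    then show "\<exists>\<gamma>\<in>aut_group n a B. \<gamma> (\<tau> 0) = x" using ps0 n by force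
  next
    assume "\<exists>\<gamma>\<in>aut_group n a B. \<gamma> (\<tau> 0) = x"
    then obtain \<gamma> where g: "\<gamma> \<in> aut_group n a B" "\<gamma> (\<tau> 0) = x" by blast
    define \<chi> where "\<chi> = restrict (\<gamma> \<circ> \<tau>) {1..<n}"
    have "\<chi> \<in> P" unfolding \<chi>_def P_def using aut_lt[OF g(1)] tau_lt by auto
    moreover have "ps \<chi> u = \<gamma> (\<tau> u)" if "u < n" for u
    proof (cases "u = 0")
      case True then show ?thesis using g(2) by (simp add: ps_def mrg_def)
    next
      case False then show ?thesis using that by (simp add: ps_def mrg_def \<chi>_def)
    qed
    then have "agree (ps \<chi>)" using agree_of_aut[OF g(1)] by blast
    ultimately show "{\<chi>\<in>P. agree (ps \<chi>)} \<noteq> {}" by auto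
  qed
  finally show ?thesis .
qed

end

lemma orbit_ind:
  fixes a :: "nat \<Rightarrow> 'a::field_char_0"
  assumes n: "n \<ge> 1" and anz: "\<forall>i<n. a i \<noteq> 0" and sym: "\<forall>i<n. \<forall>j<n. B i j = B j i"
    and tf: "twin_free n B" and j: "j < n"
  shows "\<exists>I\<in>LA n a B 1. \<forall>x<n. I (\<lambda>_. x) = (if \<exists>\<gamma>\<in>aut_group n a B. \<gamma> j = x then 1 else 0)"
proof -
  define \<tau> where "\<tau> = Transposition.transpose 0 j"
  have "\<tau> permutes {..<n}" unfolding \<tau>_def using n j by (intro permutes_swap_id) auto
  then have bij: "bij_betw \<tau> {..<n} {..<n}" by (rule permutes_imp_bij)
  interpret orbset n a B \<tau> using n anz sym tf bij by unfold_locales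
  have t0: "\<tau> 0 = j" by (simp add: \<tau>_def)
  define W where "W = (\<lambda>x. G (\<lambda>_. x)) ` {..<n}"
  define I where "I = (\<lambda>\<psi>. 1 - (\<Prod>v\<in>W - {0}. (G \<psi> - v) / (0 - v)))"
  have "I \<in> LA n a B 1"
  proof -
    have "(\<lambda>\<psi>. \<Prod>v\<in>W - {0}. (G \<psi> - v) / (0 - v)) \<in> LA n a B 1"
    proof (rule LA_prod)
      show "finite (W - {0})" by (simp add: W_def)
      fix v show "(\<lambda>\<psi>. (G \<psi> - v) / (0 - v)) \<in> LA n a B 1" by (rule LA_affdiv[OF G_LA])
    qed
    then show ?thesis unfolding I_def by (intro LA_diff LA_one)
  qed
  moreover have "I (\<lambda>_. x) = (if \<exists>\<gamma>\<in>aut_group n a B. \<gamma> j = x then 1 else 0)" if x: "x < n" for x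
  proof (cases "G (\<lambda>_. x) = 0")
    case True
    then have "(\<Prod>v\<in>W - {0}. (G (\<lambda>_. x) - v) / (0 - v)) = (\<Prod>v\<in>W - {0}. 1)"
      by (intro prod.cong refl) auto
    then show ?thesis using True G_val[OF x] t0 by (simp add: I_def)
  next
    case False
    have "G (\<lambda>_. x) \<in> W - {0}" using False x by (auto simp: W_def)
    then have "(\<Prod>v\<in>W - {0}. (G (\<lambda>_. x) - v) / (0 - v)) = 0"
      by (intro prod_zero) (auto simp: W_def)
    then show ?thesis using False G_val[OF x] t0 by (simp add: I_def)
  qed
  ultimately show ?thesis by blast
qed



definition Ev :: "nat \<Rightarrow> (nat \<Rightarrow> 'a::field) \<Rightarrow> ((nat \<Rightarrow> nat) \<Rightarrow> 'a) \<Rightarrow> 'a" where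
  "Ev n a f = (\<Sum>i<n. a i * f (\<lambda>_. i))"

definition Qf :: "nat \<Rightarrow> (nat \<Rightarrow> 'a::field) \<Rightarrow> ((nat \<Rightarrow> nat) \<Rightarrow> 'a) \<Rightarrow> ((nat \<Rightarrow> nat) \<Rightarrow> 'a) \<Rightarrow> 'a" where
  "Qf n a f g = (\<Sum>i<n. a i * (f (\<lambda>_. i) * g (\<lambda>_. i)))"

lemma Ev_add: "Ev n a (\<lambda>\<psi>. f \<psi> + g \<psi>) = Ev n a f + Ev n a g"
  by (simp add: Ev_def distrib_left sum.distrib)
lemma Ev_scale: "Ev n a (\<lambda>\<psi>. c * f \<psi>) = c * Ev n a f"
  by (simp add: Ev_def sum_distrib_left mult.left_commute)
lemma Qf_add1: "Qf n a (\<lambda>\<psi>. f \<psi> + h \<psi>) g = Qf n a f g + Qf n a h g"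
  by (simp add: Qf_def distrib_left distrib_right sum.distrib)
lemma Qf_scale1: "Qf n a (\<lambda>\<psi>. c * f \<psi>) g = c * Qf n a f g"
  by (simp add: Qf_def sum_distrib_left mult.left_commute mult.assoc)
lemma Qf_add2: "Qf n a f (\<lambda>\<psi>. g \<psi> + h \<psi>) = Qf n a f g + Qf n a f h"
  by (simp add: Qf_def distrib_left sum.distrib)
lemma Qf_scale2: "Qf n a f (\<lambda>\<psi>. c * g \<psi>) = c * Qf n a f g"
  by (simp add: Qf_def sum_distrib_left mult.left_commute)

definition Mult where
  "Mult n a B \<longleftrightarrow> (\<forall>F1 F2. is_lgraph F1 \<longrightarrow> is_lgraph F2 \<longrightarrow>
            h_w (fst F1) n a B * h_w (fst F2) n a B = h_w (glue F1 F2) n a B)"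

lemma Pgen:
  fixes a :: "nat \<Rightarrow> 'a::field"
  assumes M: "Mult n a B" and S0: "(\<Sum>i<n. a i) \<noteq> 0"
    and K1: "1 \<le> K1" "\<forall>e\<in>set E1. fst e < K1 \<and> snd e < K1"
    and K2: "1 \<le> K2" "\<forall>e\<in>set E2. fst e < K2 \<and> snd e < K2"
  shows "(\<Sum>i<n. a i) * Qf n a (lh n a B {1..<K1} E1) (lh n a B {1..<K2} E2) =
         Ev n a (lh n a B {1..<K1} E1) * Ev n a (lh n a B {1..<K2} E2)"
proof -
  define S where "S = (\<Sum>i<n. a i)"
  have L1: "is_lgraph ((K1, E1), 0)" using K1 by (force simp: is_lgraph_def wf_graph_def)
  have L2: "is_lgraph ((K2, E2), 0)" using K2 by (force simp: is_lgraph_def wf_graph_def)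
  have x1: "xr n a B (K1, E1) 0 i = lh n a B {1..<K1} E1 (\<lambda>_. i)" for i
  proof -
    have "{0..<K1} - {0} = {1..<K1}" by auto
    then show ?thesis by (simp add: xr_def)
  qed
  have x2: "xr n a B (K2, E2) 0 i = lh n a B {1..<K2} E2 (\<lambda>_. i)" for i
  proof -
    have "{0..<K2} - {0} = {1..<K2}" by auto
    then show ?thesis by (simp add: xr_def)
  qed
  have h1: "hom_w (K1, E1) n a B = Ev n a (lh n a B {1..<K1} E1)"
    using hom_xr[OF L1, where n=n and a=a and B=B] x1 by (simp add: Ev_def)
  have h2: "hom_w (K2, E2) n a B = Ev n a (lh n a B {1..<K2} E2)"
    using hom_xr[OF L2, where n=n and a=a and B=B] x2 by (simp add: Ev_def)
  have hG: "hom_w (glue ((K1, E1), 0) ((K2, E2), 0)) n a B = Qf n a (lh n a B {1..<K1} E1) (lh n a B {1..<K2} E2)"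
    using hom_glue[OF L1 L2, where n=n and a=a and B=B] x1 x2 by (simp add: Qf_def)
  obtain c1 where c1: "num_components (K1, E1) = Suc c1" using ncomp_pos[OF L1] by (cases "num_components (K1, E1)") auto
  obtain c2 where c2: "num_components (K2, E2) = Suc c2" using ncomp_pos[OF L2] by (cases "num_components (K2, E2)") auto
  have cG: "num_components (glue ((K1, E1), 0) ((K2, E2), 0)) = Suc (c1 + c2)" using ncomp_glue[OF L1 L2] c1 c2 by simp
  have "h_w (K1, E1) n a B * h_w (K2, E2) n a B = h_w (glue ((K1, E1), 0) ((K2, E2), 0)) n a B"
    using M L1 L2 unfolding Mult_def by (metis fst_conv)
  then have eq: "Ev n a (lh n a B {1..<K1} E1) / S ^ Suc c1 * (Ev n a (lh n a B {1..<K2} E2) / S ^ Suc c2) =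
      Qf n a (lh n a B {1..<K1} E1) (lh n a B {1..<K2} E2) / S ^ Suc (c1 + c2)"
    unfolding h_w_def h1 h2 hG c1 c2 cG S_def .
  have S: "S \<noteq> 0" using S0 S_def by simp
  have "S ^ Suc c1 * S ^ Suc c2 = S * S ^ Suc (c1 + c2)" by (simp add: power_add)
  then show ?thesis using eq S unfolding S_def[symmetric]
    by (simp add: field_simps)
qed

lemma P_LA:
  fixes a :: "nat \<Rightarrow> 'a::field"
  assumes M: "Mult n a B" and S0: "(\<Sum>i<n. a i) \<noteq> 0"
    and f: "f \<in> LA n a B 1" and g: "g \<in> LA n a B 1"
  shows "(\<Sum>i<n. a i) * Qf n a f g = Ev n a f * Ev n a g"
  using f
proof induction
  case (gen K1 E1)
  show ?case using g
  proof induction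
    case (gen K2 E2)
    then show ?case using Pgen[OF M S0] \<open>1 \<le> K1\<close> \<open>\<forall>e\<in>set E1. fst e < K1 \<and> snd e < K1\<close> by blast
  next
    case (add g1 g2)
    then show ?case by (simp add: Qf_add2 Ev_add distrib_left)
  next
    case (scale g1 c)
    then show ?case by (simp add: Qf_scale2 Ev_scale mult.left_commute)
  qed
next
  case (add f1 f2)
  then show ?case by (simp add: Qf_add1 Ev_add distrib_left distrib_right)
next
  case (scale f1 c)
  then show ?case by (simp add: Qf_scale1 Ev_scale mult.left_commute mult.assoc)
qed

lemma Ev_orbit:
  fixes a :: "nat \<Rightarrow> 'a::field_char_0"
  assumes anz: "\<forall>i<n. a i \<noteq> 0" and j: "j < n"
    and I: "\<forall>x<n. I (\<lambda>_. x) = (if \<exists>\<gamma>\<in>aut_group n a B. \<gamma> j = x then 1 else 0)"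
  shows "Ev n a I \<noteq> 0"
proof -
  define Orb where "Orb = {x\<in>{..<n}. \<exists>\<gamma>\<in>aut_group n a B. \<gamma> j = x}"
  have "Ev n a I = (\<Sum>x<n. if \<exists>\<gamma>\<in>aut_group n a B. \<gamma> j = x then a x else 0)"
    unfolding Ev_def by (rule sum.cong[OF refl]) (simp add: I)
  also have "\<dots> = (\<Sum>x\<in>Orb. a x)" unfolding Orb_def by (rule sum.inter_filter[symmetric]) simp
  also have "\<dots> = (\<Sum>x\<in>Orb. a j)"
  proof (rule sum.cong[OF refl])
    fix x assume "x \<in> Orb"
    then obtain \<gamma> where "\<gamma> \<in> aut_group n a B" "\<gamma> j = x" by (auto simp: Orb_def)
    then show "a x = a j" using j by (auto simp: aut_group_def)
  qed
  also have "\<dots> = of_nat (card Orb) * a j" by simp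
  finally have E: "Ev n a I = of_nat (card Orb) * a j" .
  have "j \<in> Orb" unfolding Orb_def using j aut_id[of n a B] by (auto intro!: bexI[of _ id])
  then have "card Orb \<noteq> 0" by (auto simp: Orb_def)
  then show ?thesis using E anz j by simp
qed

theorem lemma2p2:
  fixes n :: nat and a :: "nat \<Rightarrow> 'a::field_char_0" and B :: "nat \<Rightarrow> nat \<Rightarrow> 'a"
  assumes "n \<ge> 1"
    and "\<forall>i<n. a i \<noteq> 0"
    and "\<forall>i<n. \<forall>j<n. B i j = B j i"
    and "twin_free n B"
    and "(\<Sum>i<n. a i) \<noteq> 0"
  shows "(\<forall>F1 F2. is_lgraph F1 \<longrightarrow> is_lgraph F2 \<longrightarrow>
            h_w (fst F1) n a B * h_w (fst F2) n a B = h_w (glue F1 F2) n a B)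
         \<longleftrightarrow> (\<forall>i<n. \<forall>j<n. \<exists>\<gamma>\<in>aut_group n a B. \<gamma> i = j)"
proof
  assume "\<forall>F1 F2. is_lgraph F1 \<longrightarrow> is_lgraph F2 \<longrightarrow>
            h_w (fst F1) n a B * h_w (fst F2) n a B = h_w (glue F1 F2) n a B"
  then have M: "Mult n a B" by (simp add: Mult_def)
  have r0: "\<exists>\<gamma>\<in>aut_group n a B. \<gamma> 0 = j" if j: "j < n" for j
  proof (rule ccontr)
    assume nr: "\<not> (\<exists>\<gamma>\<in>aut_group n a B. \<gamma> 0 = j)"
    obtain I0 where I0: "I0 \<in> LA n a B 1" "\<forall>x<n. I0 (\<lambda>_. x) = (if \<exists>\<gamma>\<in>aut_group n a B. \<gamma> 0 = x then 1 else 0)"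
      using orbit_ind[OF assms(1-4), of 0] assms(1) by auto
    obtain Ij where Ij: "Ij \<in> LA n a B 1" "\<forall>x<n. Ij (\<lambda>_. x) = (if \<exists>\<gamma>\<in>aut_group n a B. \<gamma> j = x then 1 else 0)"
      using orbit_ind[OF assms(1-4) j] by auto
    have "Qf n a I0 Ij = 0"
      unfolding Qf_def
    proof (rule sum.neutral, rule ballI)
      fix x assume "x \<in> {..<n}"
      then have x: "x < n" by simp
      have "\<not> ((\<exists>\<gamma>\<in>aut_group n a B. \<gamma> 0 = x) \<and> (\<exists>\<gamma>\<in>aut_group n a B. \<gamma> j = x))"
      proof
        assume "(\<exists>\<gamma>\<in>aut_group n a B. \<gamma> 0 = x) \<and> (\<exists>\<gamma>\<in>aut_group n a B. \<gamma> j = x)"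
        then obtain g1 g2 where g: "g1 \<in> aut_group n a B" "g1 0 = x" "g2 \<in> aut_group n a B" "g2 j = x" by blast
        have p2: "g2 permutes {0..<n}" using g(3) by (simp add: aut_group_def)
        have "(inv g2 \<circ> g1) 0 = j" using g(2,4) permutes_inverses[OF p2] by (metis comp_apply)
        moreover have "inv g2 \<circ> g1 \<in> aut_group n a B" using g by (intro aut_comp aut_inv)
        ultimately show False using nr by blast
      qed
      then show "a x * (I0 (\<lambda>_. x) * Ij (\<lambda>_. x)) = 0" using I0(2) Ij(2) x by auto
    qed
    moreover have "(\<Sum>i<n. a i) * Qf n a I0 Ij = Ev n a I0 * Ev n a Ij"
      by (rule P_LA[OF M assms(5) I0(1) Ij(1)])
    moreover have "Ev n a I0 \<noteq> 0" using Ev_orbit[OF assms(2) _ I0(2)] assms(1) by simp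
    moreover have "Ev n a Ij \<noteq> 0" using Ev_orbit[OF assms(2) j Ij(2)] .
    ultimately show False by simp
  qed
  show "\<forall>i<n. \<forall>j<n. \<exists>\<gamma>\<in>aut_group n a B. \<gamma> i = j"
  proof (intro allI impI)
    fix i j assume i: "i < n" and j: "j < n"
    obtain gi where gi: "gi \<in> aut_group n a B" "gi 0 = i" using r0[OF i] by blast
    obtain gj where gj: "gj \<in> aut_group n a B" "gj 0 = j" using r0[OF j] by blast
    have pi: "gi permutes {0..<n}" using gi(1) by (simp add: aut_group_def)
    have "(gj \<circ> inv gi) i = j" using gi(2) gj(2) permutes_inverses[OF pi] by (metis comp_apply)
    moreover have "gj \<circ> inv gi \<in> aut_group n a B" using gi gj by (intro aut_comp aut_inv)
    ultimately show "\<exists>\<gamma>\<in>aut_group n a B. \<gamma> i = j" by blast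
  qed
next
  assume tr: "\<forall>i<n. \<forall>j<n. \<exists>\<gamma>\<in>aut_group n a B. \<gamma> i = j"
  show "\<forall>F1 F2. is_lgraph F1 \<longrightarrow> is_lgraph F2 \<longrightarrow>
            h_w (fst F1) n a B * h_w (fst F2) n a B = h_w (glue F1 F2) n a B"
  proof (intro allI impI)
    fix F1 F2 :: lgraph assume L1: "is_lgraph F1" and L2: "is_lgraph F2"
    obtain G1 l1 where F1: "F1 = (G1, l1)" by fastforce
    obtain G2 l2 where F2: "F2 = (G2, l2)" by fastforce
    show "h_w (fst F1) n a B * h_w (fst F2) n a B = h_w (glue F1 F2) n a B"
      using backward[OF assms(1) assms(5) tr, of G1 l1 G2 l2] L1 L2 F1 F2 by simp
  qed
qed


end
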